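(* Let $X=(X_n)_{n\in\mathbb{Z}}$ be a stationary and ergodic sequence of integer-valued random variables whose common mean $\mathbb{E}[X_0]\in[-\infty,\infty]$ exists. Let $\mathbb{Z}^R_X$ be the record graph of $X$. \begin{enumerate} \item If $\mathbb{E}[X_0]<0$, then almost surely every connected component of $\mathbb{Z}^R_X$ is of class $\mathcal{F}/\mathcal{F}$. \item If $\mathbb{E}[X_0]>0$, then almost surely $\mathbb{Z}^R_X$ is connected and of class $\mathcal{I}/\mathcal{F}$. \item If $\mathbb{E}[X_0]=0$, then almost surely $\mathbb{Z}^R_X$ is connected and is either of class $\mathcal{I}/\mathcal{F}$ or of class $\mathcal{I}/\mathcal{I}$. \end{enumerate}
   Context: For a sequence $x=(x_n)_{n\in\mathbb{Z}}$ write $y(j,k)=\sum_{l=j}^{k-1}x_l$ for integers $j<k$. The record map is $R_x(i)=\inf\{n>i: y(i,n)\ge 0\}$ if this set is nonempty, and $R_x(i)=i$ otherwise. The record graph $\mathbb{Z}^R_x$ is the directed graph with vertex set $\mathbb{Z}$ and a directed edge $i\to R_x(i)$ for every $i$ with $R_x(i)\neq i$; "connected" refers to the underlying undirected graph. For a connected component $C$ of the record graph, two vertices $u,v\in C$ are in the same foil if $R_x^n(u)=R_x^n(v)$ for some $n\ge 1$. The component $C$ is of class $\mathcal{F}/\mathcal{F}$ if it is finite; of class $\mathcal{I}/\mathcal{I}$ if it is infinite and all its foils are infinite; of class $\mathcal{I}/\mathcal{F}$ if it is infinite and all its foils are finite. A connected record graph is said to be of a class if its single component is. *)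

theory Defs
  imports "HOL-Probability.Probability"
begin

definition ysum :: "(int \<Rightarrow> int) \<Rightarrow> int \<Rightarrow> int \<Rightarrow> int" where
  "ysum x j k = (\<Sum>l\<in>{j..<k}. x l)"

text \<open>Record map: R(i) = inf{n > i : y(i,n) >= 0} if nonempty, else i.
  For a nonempty set of integers bounded below by i, the infimum is its least element.\<close>
definition record_map :: "(int \<Rightarrow> int) \<Rightarrow> int \<Rightarrow> int" where
  "record_map x i = (if \<exists>n>i. ysum x i n \<ge> 0
                      then (LEAST n. n > i \<and> ysum x i n \<ge> 0) else i)"

definition record_edges :: "(int \<Rightarrow> int) \<Rightarrow> (int \<times> int) set" where
  "record_edges x = {(i, record_map x i) | i. record_map x i \<noteq> i}"

definition rg_connected_rel :: "(int \<Rightarrow> int) \<Rightarrow> (int \<times> int) set" where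
  "rg_connected_rel x = (record_edges x \<union> (record_edges x)\<inverse>)\<^sup>*"

definition rg_component :: "(int \<Rightarrow> int) \<Rightarrow> int \<Rightarrow> int set" where
  "rg_component x v = {u. (v, u) \<in> rg_connected_rel x}"

definition rg_components :: "(int \<Rightarrow> int) \<Rightarrow> int set set" where
  "rg_components x = range (rg_component x)"

definition rg_connected :: "(int \<Rightarrow> int) \<Rightarrow> bool" where
  "rg_connected x \<longleftrightarrow> (\<forall>u v. (u, v) \<in> rg_connected_rel x)"

definition foil :: "(int \<Rightarrow> int) \<Rightarrow> int set \<Rightarrow> int \<Rightarrow> int set" where
  "foil x C u = {v \<in> C. \<exists>n\<ge>1. (record_map x ^^ n) u = (record_map x ^^ n) v}"

definition class_FF :: "(int \<Rightarrow> int) \<Rightarrow> int set \<Rightarrow> bool" where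
  "class_FF x C \<longleftrightarrow> finite C"

definition class_II :: "(int \<Rightarrow> int) \<Rightarrow> int set \<Rightarrow> bool" where
  "class_II x C \<longleftrightarrow> infinite C \<and> (\<forall>u\<in>C. infinite (foil x C u))"

definition class_IF :: "(int \<Rightarrow> int) \<Rightarrow> int set \<Rightarrow> bool" where
  "class_IF x C \<longleftrightarrow> infinite C \<and> (\<forall>u\<in>C. finite (foil x C u))"

abbreviation seq_space :: "(int \<Rightarrow> int) measure" where
  "seq_space \<equiv> PiM UNIV (\<lambda>_. count_space UNIV)"

definition shift :: "(int \<Rightarrow> int) \<Rightarrow> (int \<Rightarrow> int)" where
  "shift f = (\<lambda>n. f (n + 1))"

definition law :: "'a measure \<Rightarrow> (int \<Rightarrow> 'a \<Rightarrow> int) \<Rightarrow> (int \<Rightarrow> int) measure" where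
  "law M X = distr M seq_space (\<lambda>\<omega> n. X n \<omega>)"

definition stationary :: "'a measure \<Rightarrow> (int \<Rightarrow> 'a \<Rightarrow> int) \<Rightarrow> bool" where
  "stationary M X \<longleftrightarrow> distr (law M X) seq_space shift = law M X"

definition ergodic :: "'a measure \<Rightarrow> (int \<Rightarrow> 'a \<Rightarrow> int) \<Rightarrow> bool" where
  "ergodic M X \<longleftrightarrow> (\<forall>A \<in> sets seq_space. shift -` A \<inter> space seq_space = A \<longrightarrow>
       emeasure (law M X) A = 0 \<or> emeasure (law M X) A = 1)"

definition mean_pos :: "'a measure \<Rightarrow> ('a \<Rightarrow> int) \<Rightarrow> ennreal" where
  "mean_pos M f = (\<integral>\<^sup>+ \<omega>. ennreal (real_of_int (max 0 (f \<omega>))) \<partial>M)"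

definition mean_neg :: "'a measure \<Rightarrow> ('a \<Rightarrow> int) \<Rightarrow> ennreal" where
  "mean_neg M f = (\<integral>\<^sup>+ \<omega>. ennreal (real_of_int (max 0 (- f \<omega>))) \<partial>M)"

definition mean_exists :: "'a measure \<Rightarrow> ('a \<Rightarrow> int) \<Rightarrow> bool" where
  "mean_exists M f \<longleftrightarrow> mean_pos M f \<noteq> \<infinity> \<or> mean_neg M f \<noteq> \<infinity>"

definition ext_mean :: "'a measure \<Rightarrow> ('a \<Rightarrow> int) \<Rightarrow> ereal" where
  "ext_mean M f = enn2ereal (mean_pos M f) - enn2ereal (mean_neg M f)"

end

theory Submission
  imports Defs
begin


definition Sx :: "(int \<Rightarrow> int) \<Rightarrow> int \<Rightarrow> int" where
  "Sx x n = (if 0 \<le> n then ysum x 0 n else - ysum x n 0)"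

lemma ysum_same[simp]: "ysum x i i = 0"
  unfolding ysum_def by simp

lemma ysum_split:
  assumes "i \<le> m" "m \<le> n"
  shows "ysum x i n = ysum x i m + ysum x m n"
proof -
  have "{i..<n} = {i..<m} \<union> {m..<n}" using assms by auto
  moreover have "{i..<m} \<inter> {m..<n} = {}" by auto
  ultimately show ?thesis unfolding ysum_def by (simp add: sum.union_disjoint)
qed

lemma ysum_Sx: assumes "i \<le> n" shows "ysum x i n = Sx x n - Sx x i"
proof (cases "0 \<le> i")
  case True
  then show ?thesis using ysum_split[of 0 i n x] assms by (simp add: Sx_def)
next
  case False
  show ?thesis
  proof (cases "0 \<le> n")
    case True
    then show ?thesis using ysum_split[of i 0 n x] False by (simp add: Sx_def)
  next
    case False2: False
    then show ?thesis using ysum_split[of i n 0 x] False assms by (simp add: Sx_def)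
  qed
qed

lemma int_least:
  fixes P :: "int \<Rightarrow> bool"
  assumes "P n" "\<And>m. P m \<Longrightarrow> i < m"
  shows "P (LEAST m. P m)" "\<And>m. P m \<Longrightarrow> (LEAST m. P m) \<le> m"
proof -
  define Q where "Q d \<longleftrightarrow> P (i + int d)" for d :: nat
  have "Q (nat (n - i))" using assms unfolding Q_def by (smt (verit) int_nat_eq)
  define d0 where "d0 = (LEAST d. Q d)"
  have Qd0: "Q d0" unfolding d0_def by (rule LeastI) fact
  have min: "i + int d0 \<le> m" if "P m" for m
  proof -
    have "Q (nat (m - i))" using that assms(2)[OF that] unfolding Q_def by (smt (verit) int_nat_eq)
    then have "d0 \<le> nat (m - i)" unfolding d0_def by (rule Least_le)
    then show ?thesis using assms(2)[OF that] by linarith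
  qed
  have eq: "(LEAST m. P m) = i + int d0"
    by (rule Least_equality) (use Qd0 min Q_def in auto)
  show "P (LEAST m. P m)" using Qd0 eq Q_def by simp
  show "\<And>m. P m \<Longrightarrow> (LEAST m. P m) \<le> m" using eq min by simp
qed

lemma rm_Sx: "record_map x i = (if \<exists>n>i. Sx x i \<le> Sx x n then (LEAST n. i < n \<and> Sx x i \<le> Sx x n) else i)"
proof -
  have e: "(i < n \<and> 0 \<le> ysum x i n) = (i < n \<and> Sx x i \<le> Sx x n)" for n
    using ysum_Sx[of i n x] by auto
  show ?thesis unfolding record_map_def e by simp
qed

abbreviation nofix :: "(int \<Rightarrow> int) \<Rightarrow> bool" where
  "nofix x \<equiv> (\<forall>i. \<exists>n>i. Sx x i \<le> Sx x n)"

lemma R_props: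
  assumes "\<exists>n>i. Sx x i \<le> Sx x n"
  shows "i < record_map x i" "Sx x i \<le> Sx x (record_map x i)"
    "\<And>m. i < m \<Longrightarrow> m < record_map x i \<Longrightarrow> Sx x m < Sx x i"
proof -
  obtain n where n: "n > i" "Sx x i \<le> Sx x n" using assms by auto
  have R: "record_map x i = (LEAST n. i < n \<and> Sx x i \<le> Sx x n)" using assms by (simp add: rm_Sx)
  note L = int_least[of "\<lambda>n. i < n \<and> Sx x i \<le> Sx x n" n i]
  show "i < record_map x i" "Sx x i \<le> Sx x (record_map x i)" using L(1) n R by auto
  show "Sx x m < Sx x i" if "i < m" "m < record_map x i" for m
    using L(2)[of m] that n R by force
qed

lemma R_fix: assumes "\<not> (\<exists>n>i. Sx x i \<le> Sx x n)" shows "record_map x i = i"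
  using assms by (subst rm_Sx) argo

lemma R_ge: "i \<le> record_map x i"
  using R_props(1)[of i x] R_fix[of i x] by fastforce

lemma R_S: "Sx x i \<le> Sx x (record_map x i)"
  using R_props(2)[of i x] R_fix[of i x] by fastforce

lemma R_le: assumes "i < n" "Sx x i \<le> Sx x n" shows "record_map x i \<le> n"
proof -
  have R: "record_map x i = (LEAST n. i < n \<and> Sx x i \<le> Sx x n)" using assms by (auto simp add: rm_Sx)
  show ?thesis unfolding R by (rule int_least(2)[of _ n i]) (use assms in auto)
qed

lemma R_between:
  assumes "i \<le> m" "m < record_map x i" shows "Sx x m \<le> Sx x i"
proof (cases "m = i")
  case False
  then have "\<exists>n>i. Sx x i \<le> Sx x n" using R_fix[of i x] assms by force
  then show ?thesis using R_props(3)[of i x m] assms False by force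
qed simp

lemma Rn_ge: "i \<le> (record_map x ^^ k) i"
  by (induction k) (auto intro: order_trans[OF _ R_ge])

lemma Rn_mono: "k \<le> l \<Longrightarrow> (record_map x ^^ k) i \<le> (record_map x ^^ l) i"
proof (induction l)
  case (Suc l)
  then show ?case using R_ge[of "(record_map x ^^ l) i" x] by (cases "k = Suc l") auto
qed simp

lemma Rn_S_mono: "k \<le> l \<Longrightarrow> Sx x ((record_map x ^^ k) i) \<le> Sx x ((record_map x ^^ l) i)"
proof (induction l)
  case (Suc l)
  then show ?case using R_S[of x "(record_map x ^^ l) i"] by (cases "k = Suc l") auto
qed simp

lemma funpow_split: "k \<le> N \<Longrightarrow> (f ^^ N) y = (f ^^ (N - k)) ((f ^^ k) y)"
  by (metis funpow_add le_add_diff_inverse2 o_apply)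

lemma rec_chain:
  assumes "i \<le> n" "\<forall>m. i \<le> m \<and> m < n \<longrightarrow> Sx x m \<le> Sx x n"
  shows "\<exists>k. (record_map x ^^ k) i = n"
  using assms
proof (induction "nat (n - i)" arbitrary: i rule: less_induct)
  case less
  show ?case
  proof (cases "i = n")
    case True
    then show ?thesis by (rule_tac x=0 in exI) simp
  next
    case False
    then have lt: "i < n" using less.prems by simp
    have "Sx x i \<le> Sx x n" using less.prems lt by auto
    then have h: "\<exists>n'>i. Sx x i \<le> Sx x n'" using lt by auto
    have Rle: "record_map x i \<le> n" using R_le lt \<open>Sx x i \<le> Sx x n\<close> by blast
    have Rgt: "i < record_map x i" using R_props(1)[OF h] .
    have "\<exists>k. (record_map x ^^ k) (record_map x i) = n"
      by (rule less.hyps) (use Rle Rgt less.prems in auto)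
    then obtain k where "(record_map x ^^ k) (record_map x i) = n" by blast
    then have "(record_map x ^^ Suc k) i = n" by (simp add: funpow_Suc_right del: funpow.simps)
    then show ?thesis by blast
  qed
qed

lemma chain_below:
  assumes "(record_map x ^^ k) w = v" "w \<le> t" "t < v"
  shows "Sx x t \<le> Sx x v"
  using assms
proof (induction k arbitrary: w)
  case 0
  then show ?case by simp
next
  case (Suc k)
  have v: "(record_map x ^^ k) (record_map x w) = v" using Suc.prems(1)
    by (simp add: funpow_Suc_right del: funpow.simps)
  show ?case
  proof (cases "record_map x w \<le> t")
    case True
    then show ?thesis using Suc.IH[OF v True] Suc.prems by simp
  next
    case False
    have "Sx x t \<le> Sx x w" using R_between[of w t x] False Suc.prems by simp
    also have "\<dots> \<le> Sx x (record_map x w)" by (rule R_S)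
    also have "\<dots> \<le> Sx x v" using Rn_S_mono[of 0 k x "record_map x w"] v by simp
    finally show ?thesis .
  qed
qed

lemma NF_R: "nofix x \<Longrightarrow> i < record_map x i"
  using R_props(1) by blast

lemma NF_Rn_ge: "nofix x \<Longrightarrow> i + int k \<le> (record_map x ^^ k) i"
proof (induction k)
  case (Suc k)
  then show ?case using NF_R[of x "(record_map x ^^ k) i"] by simp
qed simp

lemma NF_strict: assumes "nofix x" "k < l" shows "(record_map x ^^ k) i < (record_map x ^^ l) i"
proof -
  have "\<And>n. (\<lambda>k. (record_map x ^^ k) i) n < (\<lambda>k. (record_map x ^^ k) i) (Suc n)"
    using NF_R[OF assms(1)] by simp
  then show ?thesis using lift_Suc_mono_less[of "\<lambda>k. (record_map x ^^ k) i"] assms(2) by blast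
qed

lemma NF_inj: assumes "nofix x" "(record_map x ^^ k) i = (record_map x ^^ l) i" shows "k = l"
  using NF_strict[OF assms(1), of k l i] NF_strict[OF assms(1), of l k i] assms(2)
  by (metis less_irrefl nat_neq_iff)

lemma NF_merge:
  assumes "nofix x"
  shows "\<exists>a b. (record_map x ^^ a) i = (record_map x ^^ b) j"
proof -
  { fix i j :: int assume ij: "i \<le> j"
    define V where "V = Max (Sx x ` {i..j})"
    have fin: "finite (Sx x ` {i..j})" by simp
    have V_in: "V \<in> Sx x ` {i..j}" unfolding V_def by (rule Max_in) (use ij in auto)
    then obtain m0 where m0: "m0 \<in> {i..j}" "Sx x m0 = V" by auto
    have Vge: "Sx x m \<le> V" if "m \<in> {i..j}" for m unfolding V_def using fin that by simp
    define c where "c = (record_map x ^^ (nat (j - m0) + 1)) m0"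
    have "m0 + int (nat (j - m0) + 1) \<le> c" unfolding c_def by (rule NF_Rn_ge[OF assms])
    then have cj: "j \<le> c" using m0 by simp
    have cV: "V \<le> Sx x c" unfolding c_def using Rn_S_mono[of 0 "nat (j - m0) + 1" x m0] m0 by simp
    define P where "P n \<longleftrightarrow> j - 1 < n \<and> V \<le> Sx x n" for n
    define ns where "ns = (LEAST n. P n)"
    have Pns: "P ns" unfolding ns_def by (rule int_least(1)[of P c "j - 1"]) (use cj cV P_def in auto)
    have nsmin: "ns \<le> n" if "P n" for n unfolding ns_def by (rule int_least(2)[of P c "j - 1"]) (use cj cV P_def that in auto)
    have rec: "\<forall>m. i \<le> m \<and> m < ns \<longrightarrow> Sx x m \<le> Sx x ns"
    proof (intro allI impI)
      fix m assume m: "i \<le> m \<and> m < ns"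
      show "Sx x m \<le> Sx x ns"
      proof (cases "m \<le> j")
        case True
        then show ?thesis using Vge[of m] m Pns P_def by auto
      next
        case False
        then have "\<not> P m" using nsmin m by force
        then show ?thesis using False Pns P_def by auto
      qed
    qed
    have "\<exists>a. (record_map x ^^ a) i = ns" by (rule rec_chain) (use rec Pns P_def ij in auto)
    moreover have "\<exists>b. (record_map x ^^ b) j = ns" by (rule rec_chain) (use rec Pns P_def ij in auto)
    ultimately have "\<exists>a b. (record_map x ^^ a) i = (record_map x ^^ b) j" by metis }
  note main = this
  show ?thesis
  proof (cases "i \<le> j")
    case True
    then show ?thesis using main by blast
  next
    case False
    then show ?thesis using main[of j i] by (metis linorder_linear)
  qed
qed

lemma chain_rel: "(i, (record_map x ^^ k) i) \<in> (record_edges x)\<^sup>*"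
proof (induction k)
  case (Suc k)
  let ?c = "(record_map x ^^ k) i"
  have "(?c, record_map x ?c) \<in> (record_edges x)\<^sup>="
    unfolding record_edges_def by auto
  then show ?case using Suc by (auto intro: rtrancl_into_rtrancl)
qed simp

lemma NF_connected: assumes "nofix x" shows "rg_connected x"
  unfolding rg_connected_def
proof (intro allI)
  fix u v
  obtain a b where ab: "(record_map x ^^ a) u = (record_map x ^^ b) v" using NF_merge[OF assms] by blast
  let ?E = "record_edges x"
  have 1: "(u, (record_map x ^^ a) u) \<in> (?E \<union> ?E\<inverse>)\<^sup>*"
    using chain_rel[of u a x] rtrancl_mono[of ?E "?E \<union> ?E\<inverse>"] by blast
  have "(v, (record_map x ^^ b) v) \<in> ?E\<^sup>*" by (rule chain_rel)
  then have "((record_map x ^^ b) v, v) \<in> (?E\<inverse>)\<^sup>*" by (simp add: rtrancl_converse)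
  then have 2: "((record_map x ^^ b) v, v) \<in> (?E \<union> ?E\<inverse>)\<^sup>*"
    using rtrancl_mono[of "?E\<inverse>" "?E \<union> ?E\<inverse>"] by blast
  show "(u, v) \<in> rg_connected_rel x" unfolding rg_connected_rel_def using 1 2 ab by simp
qed


lemma comp_finite:
  assumes down: "\<forall>V. \<exists>N. \<forall>n\<ge>N. Sx x n < V" and up: "\<forall>V. \<exists>m. V < Sx x m"
  shows "finite (rg_component x w)"
proof -
  define f where "f i = Sup (Sx x ` {i..})" for i
  have bdd: "bdd_above (Sx x ` {i..})" for i
  proof -
    obtain N where N: "\<forall>n\<ge>N. Sx x n < 0" using down by blast
    have "Sx x ` {i..} \<subseteq> Sx x ` {i..<N} \<union> {..0}"
    proof
      fix y assume "y \<in> Sx x ` {i..}"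
      then obtain n where n: "n \<ge> i" "y = Sx x n" by auto
      show "y \<in> Sx x ` {i..<N} \<union> {..0}"
      proof (cases "n < N")
        case True
        then show ?thesis using n by auto
      next
        case False
        have "Sx x n < 0" using N False by simp
        then show ?thesis using n by simp
      qed
    qed
    moreover have "bdd_above (Sx x ` {i..<N} \<union> {..0})" by simp
    ultimately show ?thesis by (meson bdd_above_mono)
  qed
  have upper: "Sx x n \<le> f i" if "i \<le> n" for i n
    unfolding f_def by (rule cSup_upper) (use that bdd in auto)
  have least: "f i \<le> c" if "\<And>n. i \<le> n \<Longrightarrow> Sx x n \<le> c" for i c
    unfolding f_def by (rule cSup_least) (use that in auto)
  have inv: "f (record_map x i) = f i" for i
  proof (rule antisym)
    show "f (record_map x i) \<le> f i"
      by (rule least) (use upper R_ge[of i x] in force)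
    show "f i \<le> f (record_map x i)"
    proof (rule least)
      fix n assume n: "i \<le> n"
      show "Sx x n \<le> f (record_map x i)"
      proof (cases "record_map x i \<le> n")
        case True
        then show ?thesis by (rule upper)
      next
        case False
        have "Sx x n \<le> Sx x i" using R_between[of i n x] n False by simp
        also have "\<dots> \<le> Sx x (record_map x i)" by (rule R_S)
        also have "\<dots> \<le> f (record_map x i)" by (rule upper) simp
        finally show ?thesis .
      qed
    qed
  qed
  have rel: "f u = f w" if "(w, u) \<in> rg_connected_rel x" for u
    using that unfolding rg_connected_rel_def
  proof (induction rule: rtrancl_induct)
    case (step y z)
    then show ?case unfolding record_edges_def using inv by auto
  qed simp
  obtain N where N: "\<forall>n\<ge>N. Sx x n < f w" using down by blast
  obtain m where m: "f w < Sx x m" using up by blast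
  have "rg_component x w \<subseteq> {m<..<N}"
  proof
    fix u assume "u \<in> rg_component x w"
    then have fu: "f u = f w" using rel unfolding rg_component_def by blast
    have "u < N"
    proof (rule ccontr)
      assume "\<not> u < N"
      then have "f u \<le> f w - 1" by (intro least) (use N in force)
      then show False using fu by simp
    qed
    moreover have "m < u"
    proof (rule ccontr)
      assume "\<not> m < u"
      then have "Sx x m \<le> f u" by (intro upper) simp
      then show False using fu m by simp
    qed
    ultimately show "u \<in> {m<..<N}" by simp
  qed
  then show ?thesis by (rule finite_subset) simp
qed

definition Pw :: "(int \<Rightarrow> int) \<Rightarrow> int set" where
  "Pw x = {j. \<forall>m<j. 0 \<le> ysum x m j}"

lemma Pw_Sx: "j \<in> Pw x \<longleftrightarrow> (\<forall>m<j. Sx x m \<le> Sx x j)"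
  unfolding Pw_def using ysum_Sx by force

lemma pos_nofix:
  assumes "\<forall>V. \<exists>N. \<forall>n\<ge>N. V < Sx x n"
  shows "nofix x"
proof
  fix i
  obtain N where N: "\<forall>n\<ge>N. Sx x i < Sx x n" using assms by blast
  have "max N (i+1) \<ge> N" by simp
  then have "Sx x i < Sx x (max N (i+1))" using N by blast
  then show "\<exists>n>i. Sx x i \<le> Sx x n" by (intro exI[of _ "max N (i+1)"]) auto
qed

lemma pos_Pw:
  assumes "\<forall>V. \<exists>N. \<forall>n\<le>N. Sx x n < V"
  shows "\<forall>N. \<exists>j\<le>N. j \<in> Pw x"
proof
  fix N0
  obtain N1' where N1': "\<forall>n\<le>N1'. Sx x n < Sx x N0" using assms by blast
  define N1 where "N1 = min N1' (N0 - 1)"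
  have N1: "\<forall>n\<le>N1. Sx x n < Sx x N0" "N1 < N0" using N1' unfolding N1_def by auto
  define M where "M = Max (Sx x ` {N1..N0})"
  have "M \<in> Sx x ` {N1..N0}" unfolding M_def by (rule Max_in) (use N1 in auto)
  then obtain j where j: "j \<in> {N1..N0}" "Sx x j = M" by auto
  have Mge: "Sx x m \<le> M" if "m \<in> {N1..N0}" for m unfolding M_def using that by simp
  have "j \<in> Pw x" unfolding Pw_Sx
  proof (intro allI impI)
    fix m assume "m < j"
    show "Sx x m \<le> Sx x j"
    proof (cases "N1 \<le> m")
      case True
      then show ?thesis using Mge[of m] j \<open>m < j\<close> by auto
    next
      case False
      have "Sx x m < Sx x N0" using N1 False by simp
      moreover have "Sx x N0 \<le> M" using Mge[of N0] N1 by simp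
      ultimately show ?thesis using j by simp
    qed
  qed
  then show "\<exists>j\<le>N0. j \<in> Pw x" using j by auto
qed

definition fo :: "(int \<Rightarrow> int) \<Rightarrow> int \<Rightarrow> int set" where
  "fo x u = {v. \<exists>n\<ge>1. (record_map x ^^ n) u = (record_map x ^^ n) v}"

lemma fo_refl: "u \<in> fo x u"
  unfolding fo_def by (rule CollectI, rule exI[of _ 1]) simp

lemma fo_sym: "v \<in> fo x u \<Longrightarrow> u \<in> fo x v"
  unfolding fo_def by auto

lemma fo_later: "(record_map x ^^ n) u = (record_map x ^^ n) v \<Longrightarrow> n \<le> m \<Longrightarrow>
   (record_map x ^^ m) u = (record_map x ^^ m) v"
  using funpow_split[of n m "record_map x" u] funpow_split[of n m "record_map x" v] by simp

lemma fo_trans: "v \<in> fo x u \<Longrightarrow> w \<in> fo x v \<Longrightarrow> w \<in> fo x u"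
proof -
  assume "v \<in> fo x u" "w \<in> fo x v"
  then obtain n m where n: "n \<ge> 1" "(record_map x ^^ n) u = (record_map x ^^ n) v"
    and m: "m \<ge> 1" "(record_map x ^^ m) v = (record_map x ^^ m) w" unfolding fo_def by auto
  have "(record_map x ^^ (n+m)) u = (record_map x ^^ (n+m)) v" using fo_later[OF n(2)] by simp
  also have "\<dots> = (record_map x ^^ (n+m)) w" using fo_later[OF m(2)] by simp
  finally show "w \<in> fo x u" unfolding fo_def using n by (intro CollectI exI[of _ "n+m"]) simp
qed

lemma fo_eq: "v \<in> fo x u \<Longrightarrow> fo x v = fo x u"
  using fo_trans fo_sym by blast

lemma steps_eq:
  assumes nf: "nofix x" and ab: "(record_map x ^^ a) v = (record_map x ^^ b) u" and v: "v \<in> fo x u"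
  shows "a = b"
proof -
  let ?R = "record_map x"
  obtain n where n: "(?R ^^ n) u = (?R ^^ n) v" using v unfolding fo_def by auto
  define N where "N = n + a + b"
  define w where "w = (?R ^^ a) v"
  have "(?R ^^ N) v = (?R ^^ N) u" using fo_later[OF n, of N] unfolding N_def by simp
  moreover have "(?R ^^ N) v = (?R ^^ (N - a)) w" unfolding w_def by (rule funpow_split) (simp add: N_def)
  moreover have "(?R ^^ N) u = (?R ^^ (N - b)) w" unfolding w_def ab by (rule funpow_split) (simp add: N_def)
  ultimately have "N - a = N - b" using NF_inj[OF nf] by metis
  then show ?thesis unfolding N_def by simp
qed

lemma deep:
  assumes j0: "j0 \<in> Pw x" and unb: "\<forall>N. \<exists>j\<le>N. j \<in> Pw x"
  shows "\<exists>B. \<forall>v\<le>B. \<exists>a\<ge>r. (record_map x ^^ a) v = j0"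
proof (induction r)
  case 0
  show ?case
  proof (rule exI[of _ j0], intro allI impI)
    fix v assume "v \<le> j0"
    then have "\<exists>a. (record_map x ^^ a) v = j0" by (intro rec_chain) (use j0 Pw_Sx in auto)
    then show "\<exists>a\<ge>0. (record_map x ^^ a) v = j0" by auto
  qed
next
  case (Suc r)
  then obtain B where B: "\<forall>v\<le>B. \<exists>a\<ge>r. (record_map x ^^ a) v = j0" by blast
  obtain j' where j': "j' \<le> B" "j' \<in> Pw x" using unb by blast
  show ?case
  proof (rule exI[of _ "j' - 1"], intro allI impI)
    fix v assume v: "v \<le> j' - 1"
    obtain a1 where a1: "(record_map x ^^ a1) v = j'" using rec_chain[of v j' x] j' v Pw_Sx by force
    have "a1 \<noteq> 0" using a1 v by (cases a1) auto
    obtain a2 where a2: "a2 \<ge> r" "(record_map x ^^ a2) j' = j0" using B j' by blast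
    have "(record_map x ^^ (a2 + a1)) v = j0" using a1 a2 by (simp add: funpow_add)
    then show "\<exists>a\<ge>Suc r. (record_map x ^^ a) v = j0" using \<open>a1 \<noteq> 0\<close> a2 
      by (intro exI[of _ "a2 + a1"]) auto
  qed
qed

lemma fo_bdd_below:
  assumes nf: "nofix x" and unb: "\<forall>N. \<exists>j\<le>N. j \<in> Pw x"
  shows "\<exists>B. \<forall>v\<in>fo x u. B < v"
proof -
  obtain j0 where j0: "j0 \<le> u" "j0 \<in> Pw x" using unb by blast
  obtain p q where pq: "(record_map x ^^ p) j0 = (record_map x ^^ q) u" using NF_merge[OF nf] by blast
  obtain B where B: "\<forall>v\<le>B. \<exists>a\<ge>Suc q. (record_map x ^^ a) v = j0" using deep[OF j0(2) unb] by blast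
  have "B < v" if v: "v \<in> fo x u" for v
  proof (rule ccontr)
    assume "\<not> B < v"
    then have "v \<le> B" by simp
    then obtain a where a: "a \<ge> Suc q" "(record_map x ^^ a) v = j0" using B by blast
    have "(record_map x ^^ (p + a)) v = (record_map x ^^ q) u" using a pq by (simp add: funpow_add)
    then have "p + a = q" using steps_eq[OF nf _ v] by blast
    then show False using a by simp
  qed
  then show ?thesis by blast
qed

definition G0 :: "(int \<Rightarrow> int) \<Rightarrow> int set" where
  "G0 x = {w. \<forall>v. \<exists>a b. a \<le> b \<and> (record_map x ^^ a) v = (record_map x ^^ b) w}"

lemma G0_fin:
  assumes nf: "nofix x" and P0: "Pw x = {}" and fin: "finite (fo x u)"
  shows "G0 x \<noteq> {} \<and> finite (G0 x)"
proof -
  let ?R = "record_map x"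
  define L where "L = fo x u"
  have uL: "u \<in> L" unfolding L_def by (rule fo_refl)
  have D: "finite {w. \<exists>k. (?R ^^ k) w = l}" for l
  proof -
    have "l \<notin> Pw x" using P0 by simp
    then obtain m where m: "m < l" "Sx x l < Sx x m" unfolding Pw_Sx by force
    have "{w. \<exists>k. (?R ^^ k) w = l} \<subseteq> {m<..l}"
    proof
      fix w assume "w \<in> {w. \<exists>k. (?R ^^ k) w = l}"
      then obtain k where k: "(?R ^^ k) w = l" by blast
      have "w \<le> l" using Rn_ge[of w k x] k by simp
      moreover have "m < w"
      proof (rule ccontr)
        assume "\<not> m < w"
        then have "Sx x m \<le> Sx x l" using chain_below[OF k, where t=m] m by simp
        then show False using m by simp
      qed
      ultimately show "w \<in> {m<..l}" by simp
    qed
    then show ?thesis by (rule finite_subset) simp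
  qed
  define Low where "Low = {w. \<exists>k. (?R ^^ k) w \<in> L}"
  have "Low = (\<Union>l\<in>L. {w. \<exists>k. (?R ^^ k) w = l})" unfolding Low_def by auto
  then have finLow: "finite Low" using D fin L_def by simp
  define K where "K = {k. \<exists>w. (?R ^^ k) w \<in> L}"
  have finK1: "finite {k. (?R ^^ k) w \<in> L}" for w
  proof -
    have "{k. (?R ^^ k) w \<in> L} \<subseteq> {..nat (Max L - w)}"
    proof
      fix k assume "k \<in> {k. (?R ^^ k) w \<in> L}"
      then have "(?R ^^ k) w \<le> Max L" using fin L_def by simp
      then show "k \<in> {..nat (Max L - w)}" using NF_Rn_ge[OF nf, of w k] by simp
    qed
    then show ?thesis by (rule finite_subset) simp
  qed
  have "K = (\<Union>w\<in>Low. {k. (?R ^^ k) w \<in> L})" unfolding K_def Low_def by auto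
  then have finK: "finite K" using finLow finK1 by simp
  have "0 \<in> K" unfolding K_def using uL by (intro CollectI exI[of _ u]) simp
  define k0 where "k0 = Max K"
  have "k0 \<in> K" unfolding k0_def by (rule Max_in) (use finK \<open>0 \<in> K\<close> in auto)
  then obtain w0 where w0: "(?R ^^ k0) w0 \<in> L" unfolding K_def by blast
  have kmax: "k \<le> k0" if "k \<in> K" for k unfolding k0_def using finK that by simp
  have "w0 \<in> G0 x" unfolding G0_def
  proof (rule CollectI, rule allI)
    fix v
    obtain a b where ab: "(?R ^^ a) v = (?R ^^ b) w0" using NF_merge[OF nf] by blast
    show "\<exists>a b. a \<le> b \<and> (?R ^^ a) v = (?R ^^ b) w0"
    proof (cases "a \<le> b")
      case True
      then show ?thesis using ab by blast
    next
      case False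
      have "k0 + a - b \<in> K"
      proof (cases "b \<le> k0")
        case True
        have ar: "k0 + a - b - a = k0 - b" using True by simp
        have "(?R ^^ (k0 + a - b)) v = (?R ^^ (k0 - b)) ((?R ^^ a) v)"
          using funpow_split[of a "k0 + a - b" ?R v] True ar by simp
        also have "\<dots> = (?R ^^ (k0 - b)) ((?R ^^ b) w0)" using ab by simp
        also have "\<dots> = (?R ^^ k0) w0" using True by (intro funpow_split[symmetric]) simp
        finally show ?thesis unfolding K_def using w0 by (intro CollectI exI[of _ v]) simp
      next
        case bk: False
        define l where "l = (?R ^^ k0) w0"
        define v' where "v' = (?R ^^ (k0 + a - b)) v"
        have "(?R ^^ (b - k0)) v' = (?R ^^ a) v"
          unfolding v'_def using False bk by (simp add: funpow_add[symmetric, THEN fun_cong, simplified])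
        also have "\<dots> = (?R ^^ b) w0" by (rule ab)
        also have "\<dots> = (?R ^^ (b - k0)) l" unfolding l_def using bk by (intro funpow_split) simp
        finally have "v' \<in> fo x l" unfolding fo_def using bk by (intro CollectI exI[of _ "b - k0"]) auto
        moreover have "l \<in> fo x u" using w0 l_def L_def by simp
        ultimately have "v' \<in> L" unfolding L_def using fo_eq by blast
        then show ?thesis unfolding K_def v'_def by blast
      qed
      then have "k0 + a - b \<le> k0" by (rule kmax)
      then show ?thesis using False by simp
    qed
  qed
  moreover have "G0 x \<subseteq> Low"
  proof
    fix w assume "w \<in> G0 x"
    then obtain a b where ab: "a \<le> b" "(?R ^^ a) u = (?R ^^ b) w" unfolding G0_def by blast
    have "(?R ^^ (b - a)) w \<in> L"
    proof (cases "a = 0")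
      case True
      then show ?thesis using ab uL by simp
    next
      case False
      have "(?R ^^ a) ((?R ^^ (b - a)) w) = (?R ^^ b) w" using ab(1) by (metis funpow_add o_apply le_add_diff_inverse)
      then show ?thesis unfolding L_def fo_def using ab False by (intro CollectI exI[of _ a]) auto
    qed
    then show "w \<in> Low" unfolding Low_def by blast
  qed
  ultimately show ?thesis using finLow finite_subset by blast
qed


definition shiftZ :: "int \<Rightarrow> (int \<Rightarrow> int) \<Rightarrow> (int \<Rightarrow> int)" where
  "shiftZ j x = (\<lambda>n. x (n + j))"

lemma shift_shiftZ: "shift = shiftZ 1"
  unfolding shift_def shiftZ_def by (rule ext) simp

lemma shiftZ_shiftZ: "shiftZ a (shiftZ b x) = shiftZ (a + b) x"
  unfolding shiftZ_def by (simp add: add.assoc)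

lemma shiftZ_0: "shiftZ 0 x = x"
  unfolding shiftZ_def by simp

lemma funpow_shift: "(shift ^^ k) x = shiftZ (int k) x"
  by (induction k) (auto simp: shiftZ_0 shift_shiftZ shiftZ_shiftZ add.commute)

lemma ysum_shiftZ: "ysum (shiftZ j x) i n = ysum x (i + j) (n + j)"
proof -
  have img: "(\<lambda>l. l + j) ` {i..<n} = {i+j..<n+j}"
  proof (rule set_eqI)
    fix y
    show "y \<in> (\<lambda>l. l + j) ` {i..<n} \<longleftrightarrow> y \<in> {i+j..<n+j}"
      by (auto intro: image_eqI[of y _ "y - j"])
  qed
  have "ysum x (i + j) (n + j) = sum x ((\<lambda>l. l + j) ` {i..<n})" unfolding ysum_def img ..
  also have "\<dots> = sum (\<lambda>l. x (l + j)) {i..<n}" by (subst sum.reindex) (auto simp: inj_on_def)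
  finally show ?thesis unfolding ysum_def shiftZ_def by simp
qed

lemma rm_shiftZ: "record_map (shiftZ j x) i = record_map x (i + j) - j"
proof -
  let ?P = "\<lambda>n. i + j < n \<and> 0 \<le> ysum x (i + j) n"
  have c: "(\<exists>n>i. 0 \<le> ysum x (i + j) (n + j)) \<longleftrightarrow> (\<exists>n>i + j. 0 \<le> ysum x (i + j) n)"
  proof
    assume "\<exists>n>i. 0 \<le> ysum x (i + j) (n + j)"
    then obtain n where "n > i" "0 \<le> ysum x (i + j) (n + j)" by blast
    then show "\<exists>n>i + j. 0 \<le> ysum x (i + j) n" by (intro exI[of _ "n + j"]) simp
  next
    assume "\<exists>n>i + j. 0 \<le> ysum x (i + j) n"
    then obtain n where "n > i + j" "0 \<le> ysum x (i + j) n" by blast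
    then show "\<exists>n>i. 0 \<le> ysum x (i + j) (n + j)" by (intro exI[of _ "n - j"]) simp
  qed
  show ?thesis
  proof (cases "\<exists>n>i + j. 0 \<le> ysum x (i + j) n")
    case True
    then obtain n0 where n0: "?P n0" by blast
    have L1: "?P (LEAST n. ?P n)" by (rule int_least(1)[of ?P n0 "i+j"]) (use n0 in simp_all)
    have L2: "(LEAST n. ?P n) \<le> m" if "?P m" for m by (rule int_least(2)[of ?P n0 "i+j"]) (use n0 that in simp_all)
    have "(LEAST n. i < n \<and> 0 \<le> ysum x (i + j) (n + j)) = (LEAST n. ?P n) - j"
    proof (rule Least_equality)
      show "i < (LEAST n. ?P n) - j \<and> 0 \<le> ysum x (i + j) ((LEAST n. ?P n) - j + j)" using L1 by simp
    next
      fix y assume "i < y \<and> 0 \<le> ysum x (i + j) (y + j)"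
      then have "?P (y + j)" by simp
      then have "(LEAST n. ?P n) \<le> y + j" by (rule L2)
      then show "(LEAST n. ?P n) - j \<le> y" by simp
    qed
    then show ?thesis using True c unfolding record_map_def ysum_shiftZ by simp
  next
    case False
    have nc: "\<not> (\<exists>n>i. 0 \<le> ysum x (i + j) (n + j))" using False c by blast
    have A: "record_map (shiftZ j x) i = i" unfolding record_map_def ysum_shiftZ by (rule if_not_P[OF nc])
    have B: "record_map x (i + j) = i + j" unfolding record_map_def by (rule if_not_P[OF False])
    show ?thesis using A B by simp
  qed
qed

lemma rmn_shiftZ: "(record_map (shiftZ j x) ^^ k) i = (record_map x ^^ k) (i + j) - j"
  by (induction k) (auto simp: rm_shiftZ)

lemma fo_shiftZ: "v \<in> fo (shiftZ j x) i \<longleftrightarrow> v + j \<in> fo x (i + j)"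
  unfolding fo_def rmn_shiftZ by simp

lemma G0_shiftZ: "w \<in> G0 (shiftZ j x) \<longleftrightarrow> w + j \<in> G0 x"
proof -
  let ?Q = "\<lambda>v. \<exists>a b. a \<le> b \<and> (record_map x ^^ a) v = (record_map x ^^ b) (w + j)"
  have "w \<in> G0 (shiftZ j x) \<longleftrightarrow> (\<forall>v. ?Q (v + j))"
    unfolding G0_def rmn_shiftZ by simp
  also have "\<dots> \<longleftrightarrow> (\<forall>v. ?Q v)"
  proof
    assume H: "\<forall>v. ?Q (v + j)"
    show "\<forall>v. ?Q v"
    proof
      fix v show "?Q v" using H[rule_format, of "v - j"] by simp
    qed
  qed auto
  also have "\<dots> \<longleftrightarrow> w + j \<in> G0 x" unfolding G0_def by simp
  finally show ?thesis .
qed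

lemma Pw_shiftZ: "w \<in> Pw (shiftZ j x) \<longleftrightarrow> w + j \<in> Pw x"
proof -
  have "w \<in> Pw (shiftZ j x) \<longleftrightarrow> (\<forall>m<w. 0 \<le> ysum x (m + j) (w + j))"
    unfolding Pw_def ysum_shiftZ by simp
  also have "\<dots> \<longleftrightarrow> (\<forall>m<w + j. 0 \<le> ysum x m (w + j))"
  proof
    assume H: "\<forall>m<w. 0 \<le> ysum x (m + j) (w + j)"
    show "\<forall>m<w + j. 0 \<le> ysum x m (w + j)"
    proof (intro allI impI)
      fix m assume "m < w + j"
      then show "0 \<le> ysum x m (w + j)" using H[rule_format, of "m - j"] by simp
    qed
  qed auto
  also have "\<dots> \<longleftrightarrow> w + j \<in> Pw x" unfolding Pw_def by simp
  finally show ?thesis .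
qed

lemma rm_char: "record_map x i = a \<longleftrightarrow>
   (a = i \<and> (\<forall>n>i. ysum x i n < 0)) \<or> (i < a \<and> 0 \<le> ysum x i a \<and> (\<forall>m. i < m \<and> m < a \<longrightarrow> ysum x i m < 0))"
proof (cases "\<exists>n>i. Sx x i \<le> Sx x n")
  case True
  note P = R_props[OF True]
  have ne: "\<not> (\<forall>n>i. ysum x i n < 0)" using True ysum_Sx by force
  show ?thesis
  proof
    assume a: "record_map x i = a"
    show "(a = i \<and> (\<forall>n>i. ysum x i n < 0)) \<or> (i < a \<and> 0 \<le> ysum x i a \<and> (\<forall>m. i < m \<and> m < a \<longrightarrow> ysum x i m < 0))"
      using P a ysum_Sx by force
  next
    assume "(a = i \<and> (\<forall>n>i. ysum x i n < 0)) \<or> (i < a \<and> 0 \<le> ysum x i a \<and> (\<forall>m. i < m \<and> m < a \<longrightarrow> ysum x i m < 0))"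
    then have a: "i < a" "0 \<le> ysum x i a" "\<forall>m. i < m \<and> m < a \<longrightarrow> ysum x i m < 0" using ne by auto
    have "record_map x i \<le> a" by (rule R_le) (use a ysum_Sx in force)+
    moreover have "\<not> record_map x i < a"
    proof
      assume "record_map x i < a"
      then have "ysum x i (record_map x i) < 0" using a P(1) by auto
      then show False using P(1,2) ysum_Sx[of i "record_map x i" x] by simp
    qed
    ultimately show "record_map x i = a" by simp
  qed
next
  case False
  have R: "record_map x i = i" by (rule R_fix[OF False])
  have "\<forall>n>i. ysum x i n < 0" using False ysum_Sx by force
  then show ?thesis using R by auto
qed

lemma meas_sum_fin:
  fixes I :: "int set"
  assumes "finite I"
  shows "(\<lambda>x. \<Sum>l\<in>I. x l) \<in> measurable seq_space (count_space UNIV)"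
  using assms
proof (induction I rule: finite_induct)
  case empty
  then show ?case by simp
next
  case (insert a F)
  have "(\<lambda>x. (\<lambda>k x. k + (\<Sum>l\<in>F. x l)) (x a) x) \<in> measurable seq_space (count_space UNIV)"
  proof (rule measurable_compose_countable[where f="\<lambda>k x. k + (\<Sum>l\<in>F. x l)" and g="\<lambda>x. x a"])
    fix k :: int
    show "(\<lambda>x. k + (\<Sum>l\<in>F. x l)) \<in> measurable seq_space (count_space UNIV)"
      using measurable_compose[OF insert.IH, of "\<lambda>y. k + y" "count_space UNIV"] by simp
  next
    show "(\<lambda>x. x a) \<in> measurable seq_space (count_space UNIV)" by measurable
  qed
  then show ?case using insert by simp
qed

lemma meas_ysum[measurable]: "(\<lambda>x. ysum x i n) \<in> measurable seq_space (count_space UNIV)"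
  unfolding ysum_def by (rule meas_sum_fin) simp

lemma sets_count_int[measurable]: "(A :: int set) \<in> sets (count_space UNIV)"
  by simp

lemma meas_rm[measurable]: "(\<lambda>x. record_map x i) \<in> measurable seq_space (count_space UNIV)"
proof -
  have "{x \<in> space seq_space. record_map x i = a} \<in> sets seq_space" for a
  proof -
    have "Measurable.pred seq_space (\<lambda>x. (a = i \<and> (\<forall>n>i. ysum x i n < 0)) \<or> (i < a \<and> 0 \<le> ysum x i a \<and> (\<forall>m. i < m \<and> m < a \<longrightarrow> ysum x i m < 0)))"
      by measurable
    then show ?thesis unfolding pred_def rm_char .
  qed
  then show ?thesis unfolding measurable_count_space_eq2_countable
    by (auto simp: vimage_def Int_def conj_commute)
qed

lemma meas_rmn[measurable]: "(\<lambda>x. (record_map x ^^ k) i) \<in> measurable seq_space (count_space UNIV)"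
proof (induction k)
  case 0
  then show ?case by simp
next
  case (Suc k)
  have "(\<lambda>x. (\<lambda>c x. record_map x c) ((record_map x ^^ k) i) x) \<in> measurable seq_space (count_space UNIV)"
    by (rule measurable_compose_countable[where f="\<lambda>c x. record_map x c"]) (use Suc in simp_all)
  then show ?case by simp
qed

lemma meas_shiftZ[measurable]: "shiftZ j \<in> measurable seq_space seq_space"
  unfolding shiftZ_def by (rule measurable_PiM_single') (auto simp: space_PiM)

lemma sets_fo[measurable]: "{x \<in> space seq_space. v \<in> fo x u} \<in> sets seq_space"
proof -
  have "Measurable.pred seq_space (\<lambda>x. \<exists>n::nat. 1 \<le> n \<and> (\<exists>c. (record_map x ^^ n) u = c \<and> (record_map x ^^ n) v = c))"
    by measurable
  then show ?thesis unfolding pred_def fo_def by simp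
qed

lemma sets_G0[measurable]: "{x \<in> space seq_space. w \<in> G0 x} \<in> sets seq_space"
proof -
  have "Measurable.pred seq_space (\<lambda>x. \<forall>v. \<exists>a::nat. \<exists>b::nat. a \<le> b \<and> (\<exists>c. (record_map x ^^ a) v = c \<and> (record_map x ^^ b) w = c))"
    by measurable
  then show ?thesis unfolding pred_def G0_def by simp
qed

lemma sets_Pw[measurable]: "{x \<in> space seq_space. w \<in> Pw x} \<in> sets seq_space"
proof -
  have "Measurable.pred seq_space (\<lambda>x. \<forall>m<w. 0 \<le> ysum x m w)"
    by measurable
  then show ?thesis unfolding pred_def Pw_def by simp
qed


locale mpt = prob_space M for M :: "'a measure" +
  fixes T :: "'a \<Rightarrow> 'a"
  assumes Tm[measurable]: "T \<in> measurable M M"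
    and Tp: "\<And>A. A \<in> sets M \<Longrightarrow> emeasure M (T -` A \<inter> space M) = emeasure M A"
begin

lemma distr_T: "distr M M T = M"
  by (rule measure_eqI) (auto simp: emeasure_distr Tp)

lemma Tn_meas[measurable]: "(T ^^ n) \<in> measurable M M"
  by (induction n) (auto intro: measurable_comp)

lemma distr_Tn: "distr M M (T ^^ n) = M"
proof (induction n)
  case 0
  then show ?case by (simp add: distr_id[unfolded id_def])
next
  case (Suc n)
  have "distr M M (T ^^ Suc n) = distr (distr M M (T ^^ n)) M T"
    by (simp add: distr_distr)
  then show ?case using Suc distr_T by (simp add: comp_def)
qed

lemma emeasure_Tn: "A \<in> sets M \<Longrightarrow> emeasure M ((T ^^ n) -` A \<inter> space M) = emeasure M A"
  by (metis distr_Tn emeasure_distr Tn_meas)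

lemma integral_Tn:
  fixes f :: "'a \<Rightarrow> real"
  assumes [measurable]: "f \<in> borel_measurable M"
  shows "(\<integral>x. f ((T ^^ n) x) \<partial>M) = (\<integral>x. f x \<partial>M)"
  using integral_distr[OF Tn_meas[of n] assms] distr_Tn by simp

lemma integrable_Tn:
  fixes f :: "'a \<Rightarrow> real"
  assumes "integrable M f"
  shows "integrable M (\<lambda>x. f ((T ^^ n) x))"
  using integrable_distr_eq[OF Tn_meas[of n], of f] assms distr_Tn by simp

lemma integral_T:
  fixes f :: "'a \<Rightarrow> real"
  assumes [measurable]: "f \<in> borel_measurable M"
  shows "(\<integral>x. f (T x) \<partial>M) = (\<integral>x. f x \<partial>M)"
  using integral_distr[OF Tm assms] distr_T by simp

definition ssum :: "('a \<Rightarrow> real) \<Rightarrow> nat \<Rightarrow> 'a \<Rightarrow> real" where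
  "ssum h n x = (\<Sum>k<n. h ((T ^^ k) x))"

lemma ssum_0[simp]: "ssum h 0 x = 0"
  unfolding ssum_def by simp

lemma ssum_Suc: "ssum h (Suc n) x = h x + ssum h n (T x)"
  unfolding ssum_def sum.lessThan_Suc_shift by (simp add: funpow_Suc_right del: funpow.simps)

lemma ssum_meas[measurable]: "h \<in> borel_measurable M \<Longrightarrow> ssum h n \<in> borel_measurable M"
  unfolding ssum_def by (intro borel_measurable_sum measurable_compose[OF Tn_meas]) simp

primrec Mx :: "('a \<Rightarrow> real) \<Rightarrow> nat \<Rightarrow> 'a \<Rightarrow> real" where
  "Mx h 0 x = 0"
| "Mx h (Suc n) x = max 0 (h x + Mx h n (T x))"

lemma Mx_nonneg: "0 \<le> Mx h n x"
  by (cases n) auto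

lemma Mx_mono: "Mx h n x \<le> Mx h (Suc n) x"
proof (induction n arbitrary: x)
  case 0
  then show ?case by simp
next
  case (Suc n)
  have IH: "Mx h n (T x) \<le> Mx h (Suc n) (T x)" by (rule Suc.IH)
  have e1: "Mx h (Suc n) x = max 0 (h x + Mx h n (T x))" by simp
  have e2: "Mx h (Suc (Suc n)) x = max 0 (h x + Mx h (Suc n) (T x))" by (rule Mx.simps(2))
  show ?case unfolding e1 e2 by (intro max.mono) (use IH in auto)
qed

lemma Mx_mono': "m \<le> n \<Longrightarrow> Mx h m x \<le> Mx h n x"
proof (induction n)
  case (Suc n)
  then show ?case using Mx_mono[of h n x] by (cases "m = Suc n") auto
qed simp

lemma Mx_ge_ssum: "j \<le> n \<Longrightarrow> ssum h j x \<le> Mx h n x"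
proof (induction n arbitrary: j x)
  case 0
  then show ?case by simp
next
  case (Suc n)
  show ?case
  proof (cases j)
    case 0
    then show ?thesis using Mx_nonneg[of h "Suc n" x] by simp
  next
    case (Suc j')
    then have "ssum h j' (T x) \<le> Mx h n (T x)" using Suc.IH Suc.prems by simp
    then show ?thesis using Suc by (simp add: ssum_Suc)
  qed
qed

lemma Mx_le: "Mx h n x \<le> (\<Sum>k<n. \<bar>h ((T ^^ k) x)\<bar>)"
proof (induction n arbitrary: x)
  case 0
  then show ?case by simp
next
  case (Suc n)
  have a: "h x + Mx h n (T x) \<le> \<bar>h x\<bar> + (\<Sum>k<n. \<bar>h ((T ^^ k) (T x))\<bar>)"
    using Suc[of "T x"] abs_ge_self[of "h x"] by linarith
  have "Mx h (Suc n) x \<le> max 0 (\<bar>h x\<bar> + (\<Sum>k<n. \<bar>h ((T ^^ k) (T x))\<bar>))"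
    using max.mono[OF order_refl a, of 0] by simp
  also have "\<dots> = (\<Sum>k<Suc n. \<bar>h ((T ^^ k) x)\<bar>)"
    unfolding sum.lessThan_Suc_shift by (simp add: funpow_Suc_right sum_nonneg del: funpow.simps)
  finally show ?case .
qed

lemma Mx_meas[measurable]: "h \<in> borel_measurable M \<Longrightarrow> Mx h n \<in> borel_measurable M"
proof (induction n)
  case 0
  then show ?case by simp
next
  case (Suc n)
  then have [measurable]: "Mx h n \<in> borel_measurable M" by simp
  have "(\<lambda>x. Mx h n (T x)) \<in> borel_measurable M" by measurable
  then show ?case using Suc.prems by simp
qed

lemma Mx_int:
  assumes "integrable M h"
  shows "integrable M (Mx h n)"
proof (rule Bochner_Integration.integrable_bound)
  show "integrable M (\<lambda>x. \<Sum>k<n. \<bar>h ((T ^^ k) x)\<bar>)"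
    using integrable_Tn[OF assms] by auto
  show "Mx h n \<in> borel_measurable M" using assms by measurable
  show "AE x in M. norm (Mx h n x) \<le> norm (\<Sum>k<n. \<bar>h ((T ^^ k) x)\<bar>)"
    using Mx_le Mx_nonneg by (auto intro!: AE_I2 simp: abs_of_nonneg)
qed

lemma hopf:
  assumes hint: "integrable M h"
  defines "A \<equiv> {x \<in> space M. \<forall>B::nat. \<exists>n. real B < ssum h n x}"
  shows "A \<in> sets M" "T -` A \<inter> space M = A" "0 \<le> (\<integral>x. indicator A x * h x \<partial>M)"
proof -
  have hm[measurable]: "h \<in> borel_measurable M" using hint by auto
  show Am: "A \<in> sets M" unfolding A_def by measurable
  have inv: "x \<in> A \<longleftrightarrow> T x \<in> A" if x: "x \<in> space M" for x
  proof -
    have Tx: "T x \<in> space M" using x measurable_space[OF Tm] by blast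
    have "(\<forall>B::nat. \<exists>n. real B < ssum h n x) \<longleftrightarrow> (\<forall>B::nat. \<exists>n. real B < ssum h n (T x))"
    proof
      assume H: "\<forall>B::nat. \<exists>n. real B < ssum h n x"
      show "\<forall>B::nat. \<exists>n. real B < ssum h n (T x)"
      proof
        fix B :: nat
        obtain n where n: "real (nat \<lceil>B + \<bar>h x\<bar>\<rceil>) < ssum h n x" using H by blast
        have "n \<noteq> 0" using n by (cases n) auto
        then obtain m where m: "n = Suc m" by (cases n) auto
        have "real B + \<bar>h x\<bar> \<le> real (nat \<lceil>real B + \<bar>h x\<bar>\<rceil>)" by (rule real_nat_ceiling_ge)
        moreover have "ssum h n x = h x + ssum h m (T x)" using m ssum_Suc by simp
        ultimately have "real B < ssum h m (T x)" using n abs_ge_self[of "h x"] by linarith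
        then show "\<exists>n. real B < ssum h n (T x)" by blast
      qed
    next
      assume H: "\<forall>B::nat. \<exists>n. real B < ssum h n (T x)"
      show "\<forall>B::nat. \<exists>n. real B < ssum h n x"
      proof
        fix B :: nat
        obtain n where n: "real (nat \<lceil>B + \<bar>h x\<bar>\<rceil>) < ssum h n (T x)" using H by blast
        have "real B + \<bar>h x\<bar> \<le> real (nat \<lceil>real B + \<bar>h x\<bar>\<rceil>)" by (rule real_nat_ceiling_ge)
        then have "real B < ssum h (Suc n) x" using n ssum_Suc[of h n x] abs_ge_minus_self[of "h x"] by linarith
        then show "\<exists>n. real B < ssum h n x" by blast
      qed
    qed
    then show ?thesis unfolding A_def using x Tx by simp
  qed
  note Am[measurable]
  have [measurable]: "Mx h n \<in> borel_measurable M" for n using Mx_meas[OF hm] .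
  have Asub: "A \<subseteq> space M" unfolding A_def by auto
  show "T -` A \<inter> space M = A" using inv Asub by blast
  define D where "D n x = Mx h (Suc n) x - Mx h n (T x)" for n x
  have Dm[measurable]: "D n \<in> borel_measurable M" for n unfolding D_def by measurable
  have D_eq: "D n x = max (- Mx h n (T x)) (h x)" for n x unfolding D_def by (simp add: max_def)
  have Mint: "integrable M (Mx h n)" for n by (rule Mx_int[OF hint])
  have MTint: "integrable M (\<lambda>x. Mx h n (T x))" for n
    using integrable_Tn[OF Mint[of n], of 1] by simp
  have I1: "(\<integral>x. indicator A x * Mx h n (T x) \<partial>M) = (\<integral>x. indicator A x * Mx h n x \<partial>M)" for n
  proof -
    have "(\<integral>x. indicator A x * Mx h n (T x) \<partial>M) = (\<integral>x. indicator A (T x) * Mx h n (T x) \<partial>M)"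
      by (rule Bochner_Integration.integral_cong[OF refl]) (auto simp: indicator_def inv)
    also have "\<dots> = (\<integral>x. indicator A x * Mx h n x \<partial>M)"
      by (rule integral_T) measurable
    finally show ?thesis .
  qed
  have nonneg: "0 \<le> (\<integral>x. indicator A x * D n x \<partial>M)" for n
  proof -
    have i1: "integrable M (\<lambda>x. indicator A x * Mx h (Suc n) x)"
      using integrable_real_mult_indicator[OF Am Mint[of "Suc n"]] by (simp add: mult.commute)
    have i2: "integrable M (\<lambda>x. indicator A x * Mx h n (T x))"
      using integrable_real_mult_indicator[OF Am MTint[of n]] by (simp add: mult.commute)
    have i3: "integrable M (\<lambda>x. indicator A x * Mx h n x)"
      using integrable_real_mult_indicator[OF Am Mint[of n]] by (simp add: mult.commute)
    have "(\<integral>x. indicator A x * D n x \<partial>M) = (\<integral>x. indicator A x * Mx h (Suc n) x \<partial>M) - (\<integral>x. indicator A x * Mx h n (T x) \<partial>M)"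
      unfolding D_def right_diff_distrib by (rule Bochner_Integration.integral_diff[OF i1 i2])
    also have "\<dots> = (\<integral>x. indicator A x * Mx h (Suc n) x \<partial>M) - (\<integral>x. indicator A x * Mx h n x \<partial>M)"
      using I1 by simp
    also have "\<dots> \<ge> 0"
    proof -
      have "(\<integral>x. indicator A x * Mx h n x \<partial>M) \<le> (\<integral>x. indicator A x * Mx h (Suc n) x \<partial>M)"
        by (rule integral_mono[OF i3 i1]) (auto simp: indicator_def Mx_mono simp del: Mx.simps)
      then show ?thesis by simp
    qed
    finally show ?thesis .
  qed
  have lim: "(\<lambda>n. \<integral>x. indicator A x * D n x \<partial>M) \<longlonglongrightarrow> (\<integral>x. indicator A x * h x \<partial>M)"
  proof (rule integral_dominated_convergence[where w="\<lambda>x. \<bar>h x\<bar>"])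
    show "(\<lambda>x. indicator A x * h x) \<in> borel_measurable M" by measurable
    show "(\<lambda>x. indicator A x * D n x) \<in> borel_measurable M" for n by measurable
    show "integrable M (\<lambda>x. \<bar>h x\<bar>)" using hint by auto
    show "AE x in M. norm (indicator A x * D n x) \<le> \<bar>h x\<bar>" for n
    proof (rule AE_I2)
      fix x
      have "0 \<le> Mx h n (T x)" by (rule Mx_nonneg)
      then have "\<bar>max (- Mx h n (T x)) (h x)\<bar> \<le> \<bar>h x\<bar>" by (simp add: max_def abs_if)
      then show "norm (indicator A x * D n x) \<le> \<bar>h x\<bar>" by (auto simp: indicator_def D_eq)
    qed
    show "AE x in M. (\<lambda>n. indicator A x * D n x) \<longlonglongrightarrow> indicator A x * h x"
    proof (rule AE_I2)
      fix x assume x: "x \<in> space M"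
      show "(\<lambda>n. indicator A x * D n x) \<longlonglongrightarrow> indicator A x * h x"
      proof (cases "x \<in> A")
        case False
        then show ?thesis by simp
      next
        case True
        then have TA: "T x \<in> A" using inv x by simp
        then obtain m where m: "real (nat \<lceil>- h x\<rceil>) < ssum h m (T x)" unfolding A_def by blast
        have ev: "\<forall>\<^sub>F n in sequentially. indicator A x * D n x = indicator A x * h x"
          unfolding eventually_sequentially
        proof (intro exI[of _ m] allI impI)
          fix n assume "m \<le> n"
          then have "ssum h m (T x) \<le> Mx h n (T x)" by (rule Mx_ge_ssum)
          moreover have "- h x \<le> real (nat \<lceil>- h x\<rceil>)" by (rule real_nat_ceiling_ge)
          ultimately have "- Mx h n (T x) \<le> h x" using m by linarith
          then show "indicator A x * D n x = indicator A x * h x" unfolding D_eq by simp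
        qed
        show ?thesis by (rule tendsto_eventually[OF ev])
      qed
    qed
  qed
  show "0 \<le> (\<integral>x. indicator A x * h x \<partial>M)"
    by (rule LIMSEQ_le_const[OF lim]) (use nonneg in auto)
qed

end


context mpt begin

lemma bdd_sum:
  assumes erg: "\<And>A. A \<in> sets M \<Longrightarrow> T -` A \<inter> space M = A \<Longrightarrow> emeasure M A = 0 \<or> emeasure M A = 1"
    and hint: "integrable M h" and neg: "(\<integral>x. h x \<partial>M) < 0"
  shows "AE x in M. \<exists>B::nat. \<forall>n. ssum h n x \<le> real B"
proof -
  have hm[measurable]: "h \<in> borel_measurable M" using hint by auto
  define A where "A \<equiv> {x \<in> space M. \<forall>B::nat. \<exists>n. real B < ssum h n x}"
  note H = hopf[OF hint, folded A_def]
  note H(1)[measurable]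
  have eqA: "{x\<in>space M. x \<in> A} = A" using sets.sets_into_space[OF H(1)] by auto
  have "emeasure M A \<noteq> 1"
  proof
    assume 1: "emeasure M A = 1"
    have "AE x in M. x \<in> A" by (rule AE_I_eq_1) (use 1 H(1) eqA in auto)
    then have "(\<integral>x. indicator A x * h x \<partial>M) = (\<integral>x. h x \<partial>M)"
      by (intro integral_cong_AE) (auto elim!: eventually_mono)
    then show False using H(3) neg by simp
  qed
  then have "emeasure M A = 0" using erg[OF H(1) H(2)] by blast
  then have "AE x in M. x \<notin> A" using H(1) by (intro AE_not_in) (simp add: null_sets_def)
  then show ?thesis using AE_space
    by eventually_elim (auto simp: A_def not_less)
qed

lemma drift:
  assumes erg: "\<And>A. A \<in> sets M \<Longrightarrow> T -` A \<inter> space M = A \<Longrightarrow> emeasure M A = 0 \<or> emeasure M A = 1"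
    and hm[measurable]: "h \<in> borel_measurable M"
    and lt: "(\<integral>\<^sup>+x. ennreal (h x) \<partial>M) < (\<integral>\<^sup>+x. ennreal (- h x) \<partial>M)"
  shows "AE x in M. \<forall>V. \<exists>N. \<forall>n\<ge>N. ssum h n x < V"
proof -
  define P where "P = (\<integral>\<^sup>+x. ennreal (h x) \<partial>M)"
  have Pfin: "P < \<infinity>" using less_le_trans[OF lt top_greatest] unfolding P_def infinity_ennreal_def .
  define q where "q K = (\<integral>\<^sup>+x. ennreal (min (- h x) (real K)) \<partial>M)" for K :: nat
  have pw: "(SUP K. ennreal (min (- h x) (real K))) = ennreal (- h x)" for x
  proof (rule antisym)
    show "(SUP K. ennreal (min (- h x) (real K))) \<le> ennreal (- h x)"
      by (rule SUP_least) (auto intro: ennreal_leI)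
    have "- h x \<le> real (nat \<lceil>- h x\<rceil>)" by (rule real_nat_ceiling_ge)
    then have "ennreal (- h x) = ennreal (min (- h x) (real (nat \<lceil>- h x\<rceil>)))" by simp
    also have "\<dots> \<le> (SUP K. ennreal (min (- h x) (real K)))" by (rule SUP_upper) simp
    finally show "ennreal (- h x) \<le> (SUP K. ennreal (min (- h x) (real K)))" .
  qed
  have "(\<integral>\<^sup>+x. (SUP K. ennreal (min (- h x) (real K))) \<partial>M) = (SUP K. q K)"
    unfolding q_def by (rule nn_integral_monotone_convergence_SUP) (auto simp: incseq_def le_fun_def intro!: ennreal_leI)
  then have SUPq: "(SUP K. q K) = (\<integral>\<^sup>+x. ennreal (- h x) \<partial>M)" unfolding pw by simp
  then have "P < (SUP K. q K)" using lt P_def by simp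
  then obtain K where K: "P < q K" by (auto simp: less_SUP_iff)
  define g where "g x = max (h x) (- real K)" for x
  have gm[measurable]: "g \<in> borel_measurable M" unfolding g_def by measurable
  have gpos: "(\<integral>\<^sup>+x. ennreal (g x) \<partial>M) = P"
    unfolding P_def by (rule nn_integral_cong) (auto simp: g_def max_def ennreal_neg)
  have gneg: "(\<integral>\<^sup>+x. ennreal (- g x) \<partial>M) = q K"
    unfolding q_def by (rule nn_integral_cong) (auto simp: g_def max_def min_def)
  have "q K \<le> (\<integral>\<^sup>+x. ennreal (real K) \<partial>M)"
    unfolding q_def by (rule nn_integral_mono) (auto intro: ennreal_leI)
  also have "\<dots> = ennreal (real K)" by (simp add: emeasure_space_1)
  finally have qfin: "q K < \<infinity>" unfolding infinity_ennreal_def by (simp add: le_less_trans)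
  have gint: "integrable M g" unfolding real_integrable_def using gpos gneg Pfin qfin by auto
  have "(\<integral>x. g x \<partial>M) = enn2real P - enn2real (q K)"
    using real_lebesgue_integral_def[OF gint] gpos gneg by simp
  moreover have "enn2real P < enn2real (q K)"
  proof -
    have qeq: "q K = ennreal (enn2real (q K))" using qfin by simp
    have Pt: "P < top" using Pfin unfolding infinity_ennreal_def .
    have "enn2real P < enn2real (q K) \<longleftrightarrow> P < ennreal (enn2real (q K))" by (rule enn2real_less_iff[OF Pt])
    then show ?thesis using K qeq by simp
  qed
  ultimately have gneg0: "(\<integral>x. g x \<partial>M) < 0" by simp
  define c where "c = (\<integral>x. g x \<partial>M) / 2"
  have c0: "c < 0" using gneg0 unfolding c_def by simp
  define hh where "hh x = g x - c" for x
  have hhint: "integrable M hh" unfolding hh_def using gint by auto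
  have "(\<integral>x. hh x \<partial>M) = (\<integral>x. g x \<partial>M) - c" unfolding hh_def
    using gint by (simp add: Bochner_Integration.integral_diff prob_space)
  then have hhneg: "(\<integral>x. hh x \<partial>M) < 0" using c0 unfolding c_def by simp
  have B: "AE x in M. \<exists>B::nat. \<forall>n. ssum hh n x \<le> real B" by (rule bdd_sum[OF erg hhint hhneg])
  have ss: "ssum h n x \<le> ssum hh n x + real n * c" for n x
  proof -
    have "ssum h n x \<le> ssum g n x" unfolding ssum_def g_def by (intro sum_mono) simp
    also have "ssum g n x = ssum hh n x + real n * c" unfolding ssum_def hh_def
      by (simp add: sum_subtractf)
    finally show ?thesis .
  qed
  show ?thesis
  using B proof (rule eventually_mono, intro allI)
    fix x V assume "\<exists>B::nat. \<forall>n. ssum hh n x \<le> real B"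
    then obtain B :: nat where Bx: "\<forall>n. ssum hh n x \<le> real B" by blast
    define N where "N = nat \<lceil>(real B - V) / (- c)\<rceil> + 1"
    have "\<forall>n\<ge>N. ssum h n x < V"
    proof (intro allI impI)
      fix n assume n: "N \<le> n"
      have "(real B - V) / (- c) \<le> real (nat \<lceil>(real B - V) / (- c)\<rceil>)" by (rule real_nat_ceiling_ge)
      then have "(real B - V) / (- c) < real n" using n unfolding N_def by linarith
      moreover have cpos: "0 < - c" using c0 by simp
      ultimately have "real B - V < real n * (- c)" using pos_divide_less_eq[OF cpos] by blast
      moreover have "ssum hh n x \<le> real B" using Bx by blast
      moreover have "real n * (- c) = - (real n * c)" by simp
      ultimately show "ssum h n x < V" using ss[of n x] by linarith
    qed
    then show "\<exists>N. \<forall>n\<ge>N. ssum h n x < V" by blast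
  qed
qed

lemma recur:
  assumes erg: "\<And>A. A \<in> sets M \<Longrightarrow> T -` A \<inter> space M = A \<Longrightarrow> emeasure M A = 0 \<or> emeasure M A = 1"
    and Fm[measurable]: "F \<in> sets M" and Fpos: "emeasure M F \<noteq> 0"
  shows "AE x in M. \<forall>N. \<exists>n\<ge>N. (T ^^ n) x \<in> F"
proof -
  define U where "U N = {x \<in> space M. \<exists>n\<ge>N. (T ^^ n) x \<in> F}" for N
  have Um[measurable]: "U N \<in> sets M" for N
  proof -
    have "U N = (\<Union>n\<in>{N..}. (T ^^ n) -` F \<inter> space M)" unfolding U_def by auto
    then show ?thesis using measurable_sets[OF Tn_meas Fm] by auto
  qed
  have UN: "U N = (T ^^ N) -` U 0 \<inter> space M" for N
  proof (rule set_eqI)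
    fix x
    show "x \<in> U N \<longleftrightarrow> x \<in> (T ^^ N) -` U 0 \<inter> space M"
    proof
      assume "x \<in> U N"
      then obtain n where n: "x \<in> space M" "n \<ge> N" "(T ^^ n) x \<in> F" unfolding U_def by blast
      have "(T ^^ n) x = (T ^^ (n - N)) ((T ^^ N) x)" using n(2) by (metis funpow_add le_add_diff_inverse2 o_apply)
      moreover have "(T ^^ N) x \<in> space M" using measurable_space[OF Tn_meas n(1)] .
      ultimately show "x \<in> (T ^^ N) -` U 0 \<inter> space M" using n unfolding U_def by auto
    next
      assume "x \<in> (T ^^ N) -` U 0 \<inter> space M"
      then obtain m where m: "x \<in> space M" "(T ^^ m) ((T ^^ N) x) \<in> F" unfolding U_def by auto
      then have "(T ^^ (m + N)) x \<in> F" by (simp add: funpow_add)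
      then show "x \<in> U N" unfolding U_def using m by (intro CollectI conjI exI[of _ "m + N"]) auto
    qed
  qed
  have eqm: "emeasure M (U N) = emeasure M (U 0)" for N
    using emeasure_Tn[OF Um[of 0], of N] UN[of N] by simp
  have "F \<subseteq> U 0" unfolding U_def using sets.sets_into_space[OF Fm] by (auto intro: exI[of _ 0])
  then have "emeasure M F \<le> emeasure M (U 0)" by (rule emeasure_mono) simp
  then have U0: "emeasure M (U 0) \<noteq> 0" using Fpos by (auto simp: bot_unique[symmetric])
  define G where "G = (\<Inter>N. U N)"
  have Gm[measurable]: "G \<in> sets M" unfolding G_def using Um by (intro sets.countable_INT) auto
  have "(INF N. emeasure M (U N)) = emeasure M (\<Inter>N. U N)"
    by (rule INF_emeasure_decseq) (auto simp: decseq_def U_def, meson le_trans)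
  moreover have "(INF N. emeasure M (U N)) = (INF N::nat. emeasure M (U 0))"
    by (rule INF_cong[OF refl eqm])
  ultimately have "emeasure M G = emeasure M (U 0)" unfolding G_def by simp
  then have G0: "emeasure M G \<noteq> 0" using U0 by simp
  have inv: "T -` G \<inter> space M = G"
  proof (rule set_eqI)
    fix x
    show "x \<in> T -` G \<inter> space M \<longleftrightarrow> x \<in> G"
    proof
      assume x: "x \<in> T -` G \<inter> space M"
      show "x \<in> G" unfolding G_def U_def
      proof (intro InterI, clarify, intro conjI)
        fix N
        show "x \<in> space M" using x by simp
        obtain n where n: "n \<ge> N" "(T ^^ n) (T x) \<in> F" using x unfolding G_def U_def by blast
        then show "\<exists>n\<ge>N. (T ^^ n) x \<in> F" by (intro exI[of _ "Suc n"]) (simp add: funpow_Suc_right del: funpow.simps)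
      qed
    next
      assume x: "x \<in> G"
      have xs: "x \<in> space M" using x unfolding G_def U_def by auto
      have Tx: "T x \<in> space M" using measurable_space[OF Tm xs] .
      have "T x \<in> U N" for N
      proof -
        obtain n where n: "n \<ge> Suc N" "(T ^^ n) x \<in> F" using x unfolding G_def U_def by blast
        then obtain m where m: "n = Suc m" by (cases n) auto
        show ?thesis unfolding U_def using n m Tx by (auto simp: funpow_Suc_right simp del: funpow.simps)
      qed
      then show "x \<in> T -` G \<inter> space M" using xs unfolding G_def by auto
    qed
  qed
  have "emeasure M G = 1" using erg[OF Gm inv] G0 by blast
  moreover have eqG: "{x\<in>space M. x \<in> G} = G" using sets.sets_into_space[OF Gm] by auto
  ultimately have "AE x in M. x \<in> G" by (intro AE_I_eq_1) auto
  then show ?thesis by (rule eventually_mono) (auto simp: G_def U_def)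
qed

end


lemma space_seq: "space seq_space = UNIV"
  by (simp add: space_PiM PiE_UNIV_domain)

lemma shiftZ_inv1: "shiftZ (-1) (shiftZ 1 x) = x" "shiftZ 1 (shiftZ (-1) x) = x"
  by (simp_all add: shiftZ_shiftZ shiftZ_0)

locale lawsetup =
  fixes \<mu> :: "(int \<Rightarrow> int) measure"
  assumes prob: "prob_space \<mu>"
    and sets_mu: "sets \<mu> = sets seq_space"
    and stat: "distr \<mu> seq_space shift = \<mu>"
    and ergo: "\<forall>A \<in> sets seq_space. shift -` A \<inter> space seq_space = A \<longrightarrow> emeasure \<mu> A = 0 \<or> emeasure \<mu> A = 1"
begin

lemma space_mu: "space \<mu> = UNIV"
  using sets_eq_imp_space_eq[OF sets_mu] space_seq by simp

lemma meas_mu: "measurable \<mu> N = measurable seq_space N"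
  by (rule measurable_cong_sets[OF sets_mu refl])

lemma meas_mu2: "measurable N \<mu> = measurable N seq_space"
  by (rule measurable_cong_sets[OF refl sets_mu])

lemma shiftZ_meas_mu: "shiftZ j \<in> measurable \<mu> \<mu>"
  unfolding meas_mu meas_mu2 by (rule meas_shiftZ)

lemma pres1: assumes "A \<in> sets seq_space" shows "emeasure \<mu> (shiftZ 1 -` A) = emeasure \<mu> A"
proof -
  have m: "shift \<in> measurable \<mu> seq_space" unfolding meas_mu shift_shiftZ by (rule meas_shiftZ)
  have "emeasure \<mu> A = emeasure (distr \<mu> seq_space shift) A" using stat by simp
  also have "\<dots> = emeasure \<mu> (shift -` A \<inter> space \<mu>)" by (rule emeasure_distr[OF m assms])
  finally show ?thesis unfolding space_mu shift_shiftZ by simp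
qed

lemma presm1: assumes A: "A \<in> sets seq_space" shows "emeasure \<mu> (shiftZ (-1) -` A) = emeasure \<mu> A"
proof -
  have B: "shiftZ (-1) -` A \<in> sets seq_space"
    using measurable_sets[OF meas_shiftZ A] space_seq by simp
  have "shiftZ 1 -` (shiftZ (-1) -` A) = A" using shiftZ_inv1 by auto
  then show ?thesis using pres1[OF B] by simp
qed

lemma presZ: assumes A: "A \<in> sets seq_space" shows "emeasure \<mu> (shiftZ j -` A) = emeasure \<mu> A"
proof -
  have pos: "emeasure \<mu> (shiftZ (int n) -` A) = emeasure \<mu> A" for n
  proof (induction n)
    case 0
    then show ?case by (simp add: shiftZ_0)
  next
    case (Suc n)
    have B: "shiftZ (int n) -` A \<in> sets seq_space"
      using measurable_sets[OF meas_shiftZ A] space_seq by simp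
    have "shiftZ (int (Suc n)) -` A = shiftZ 1 -` (shiftZ (int n) -` A)"
      by (auto simp: shiftZ_shiftZ add.commute)
    then show ?case using pres1[OF B] Suc by simp
  qed
  have neg: "emeasure \<mu> (shiftZ (- int n) -` A) = emeasure \<mu> A" for n
  proof (induction n)
    case 0
    then show ?case by (simp add: shiftZ_0)
  next
    case (Suc n)
    have B: "shiftZ (- int n) -` A \<in> sets seq_space"
      using measurable_sets[OF meas_shiftZ A] space_seq by simp
    have "shiftZ (- int (Suc n)) -` A = shiftZ (-1) -` (shiftZ (- int n) -` A)"
      by (auto simp: shiftZ_shiftZ add.commute)
    then show ?case using presm1[OF B] Suc by simp
  qed
  show ?thesis
  proof (cases "0 \<le> j")
    case True
    then show ?thesis using pos[of "nat j"] by simp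
  next
    case False
    then show ?thesis using neg[of "nat (- j)"] by simp
  qed
qed

lemma AE_shiftZ:
  assumes ae: "AE x in \<mu>. P x" and Pm: "{x. P x} \<in> sets seq_space"
  shows "AE x in \<mu>. P (shiftZ j x)"
proof -
  have N: "{x. \<not> P x} \<in> sets seq_space" using sets.compl_sets[OF Pm] space_seq by (simp add: Compl_eq_Diff_UNIV[symmetric] Collect_neg_eq)
  have "emeasure \<mu> {x. \<not> P x} = 0"
    using ae AE_iff_measurable[of "{x. \<not> P x}" \<mu> P] N sets_mu space_mu by simp
  then have "emeasure \<mu> (shiftZ j -` {x. \<not> P x}) = 0" using presZ[OF N] by simp
  moreover have "shiftZ j -` {x. \<not> P x} \<in> sets \<mu>"
    using measurable_sets[OF meas_shiftZ N] space_seq sets_mu by simp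
  ultimately show ?thesis
    using AE_iff_measurable[of "shiftZ j -` {x. \<not> P x}" \<mu> "\<lambda>x. P (shiftZ j x)"] space_mu by auto
qed

sublocale F: mpt \<mu> "shiftZ 1"
proof (rule mpt.intro[OF prob], rule mpt_axioms.intro)
  show "shiftZ 1 \<in> \<mu> \<rightarrow>\<^sub>M \<mu>" by (rule shiftZ_meas_mu)
  show "emeasure \<mu> (shiftZ 1 -` A \<inter> space \<mu>) = emeasure \<mu> A" if "A \<in> sets \<mu>" for A
    using pres1[of A] that sets_mu space_mu by simp
qed

sublocale B: mpt \<mu> "shiftZ (-1)"
proof (rule mpt.intro[OF prob], rule mpt_axioms.intro)
  show "shiftZ (-1) \<in> \<mu> \<rightarrow>\<^sub>M \<mu>" by (rule shiftZ_meas_mu)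
  show "emeasure \<mu> (shiftZ (-1) -` A \<inter> space \<mu>) = emeasure \<mu> A" if "A \<in> sets \<mu>" for A
    using presm1[of A] that sets_mu space_mu by simp
qed

lemma ergF: "A \<in> sets \<mu> \<Longrightarrow> shiftZ 1 -` A \<inter> space \<mu> = A \<Longrightarrow> emeasure \<mu> A = 0 \<or> emeasure \<mu> A = 1"
  using ergo sets_mu space_mu space_seq shift_shiftZ by auto

lemma ergB: assumes A: "A \<in> sets \<mu>" and inv: "shiftZ (-1) -` A \<inter> space \<mu> = A"
  shows "emeasure \<mu> A = 0 \<or> emeasure \<mu> A = 1"
proof (rule ergF[OF A])
  have "shiftZ 1 -` A = shiftZ 1 -` (shiftZ (-1) -` A)" using inv space_mu by simp
  also have "\<dots> = A" using shiftZ_inv1 by auto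
  finally show "shiftZ 1 -` A \<inter> space \<mu> = A" using space_mu by simp
qed

lemma funpow_F: "(shiftZ 1 ^^ k) x = shiftZ (int k) x"
  by (induction k) (auto simp: shiftZ_0 shiftZ_shiftZ add.commute)

lemma funpow_B: "(shiftZ (-1) ^^ k) x = shiftZ (- int k) x"
  by (induction k) (auto simp: shiftZ_0 shiftZ_shiftZ add.commute)

end


lemma ysum_single: "ysum x a (a + 1) = x a"
proof -
  have "{a..<a+1} = {a}" by auto
  then show ?thesis unfolding ysum_def by simp
qed

lemma sum_fwd: "(\<Sum>k<n. real_of_int (x (int k))) = real_of_int (Sx x (int n))"
proof (induction n)
  case 0
  then show ?case by (simp add: Sx_def)
next
  case (Suc n)
  have "ysum x (int n) (int n + 1) = Sx x (int n + 1) - Sx x (int n)" by (rule ysum_Sx) simp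
  then have "x (int n) = Sx x (1 + int n) - Sx x (int n)" using ysum_single[of x "int n"] by (simp add: add.commute)
  then show ?case using Suc by simp
qed

lemma sum_bwd: "(\<Sum>k<n. real_of_int (x (- 1 - int k))) = - real_of_int (Sx x (- int n))"
proof (induction n)
  case 0
  then show ?case by (simp add: Sx_def)
next
  case (Suc n)
  have "ysum x (- 1 - int n) (- 1 - int n + 1) = Sx x (- 1 - int n + 1) - Sx x (- 1 - int n)" by (rule ysum_Sx) simp
  then have "x (- 1 - int n) = Sx x (- int n) - Sx x (- 1 - int n)" using ysum_single[of x "- 1 - int n"] by simp
  then show ?case using Suc by simp
qed

lemma meas_coord[measurable]: "(\<lambda>x. real_of_int (x i)) \<in> borel_measurable seq_space"
  using measurable_compose[OF measurable_component_singleton[of i UNIV "\<lambda>_. count_space UNIV"]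
      measurable_count_space[of "real_of_int"]] by (simp add: o_def)

context lawsetup begin

lemma meas_coord_mu[measurable]: "(\<lambda>x. c * real_of_int (x i)) \<in> borel_measurable \<mu>"
  unfolding meas_mu by measurable

lemma ssum_F: "F.ssum h n x = (\<Sum>k<n. h (shiftZ (int k) x))"
  unfolding F.ssum_def funpow_F ..

lemma ssum_B: "B.ssum h n x = (\<Sum>k<n. h (shiftZ (- int k) x))"
  unfolding B.ssum_def funpow_B ..

lemma nn_shift_bwd: "(\<integral>\<^sup>+x. f (x (-1)) \<partial>\<mu>) = (\<integral>\<^sup>+x. f (x 0) \<partial>\<mu>)" for f :: "int \<Rightarrow> ennreal"
proof -
  have m: "(\<lambda>x. f (x 0)) \<in> borel_measurable \<mu>"
    unfolding meas_mu using measurable_compose[OF measurable_component_singleton[of 0 UNIV "\<lambda>_. count_space UNIV"]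
      measurable_count_space[of f]] by (simp add: o_def)
  have "(\<integral>\<^sup>+x. f (x 0) \<partial>\<mu>) = (\<integral>\<^sup>+x. f (x 0) \<partial>(distr \<mu> \<mu> (shiftZ (-1))))" using B.distr_T by simp
  also have "\<dots> = (\<integral>\<^sup>+x. f (shiftZ (-1) x 0) \<partial>\<mu>)" by (rule nn_integral_distr[OF shiftZ_meas_mu]) (use m in simp)
  finally show ?thesis by (simp add: shiftZ_def)
qed

lemma fwd_gen:
  assumes lt: "(\<integral>\<^sup>+x. ennreal (c * real_of_int (x 0)) \<partial>\<mu>) < (\<integral>\<^sup>+x. ennreal (- (c * real_of_int (x 0))) \<partial>\<mu>)"
  shows "AE x in \<mu>. \<forall>V. \<exists>N::nat. \<forall>n\<ge>N. c * real_of_int (Sx x (int n)) < V"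
proof -
  have "AE x in \<mu>. \<forall>V. \<exists>N. \<forall>n\<ge>N. F.ssum (\<lambda>x. c * real_of_int (x 0)) n x < V"
    by (rule F.drift[OF ergF meas_coord_mu lt])
  moreover have "F.ssum (\<lambda>x. c * real_of_int (x 0)) n x = c * real_of_int (Sx x (int n))" for n x
    unfolding ssum_F using sum_fwd[where n=n and x=x] by (simp add: shiftZ_def sum_distrib_left[symmetric])
  ultimately show ?thesis by simp
qed

lemma bwd_gen:
  assumes lt: "(\<integral>\<^sup>+x. ennreal (c * real_of_int (x 0)) \<partial>\<mu>) < (\<integral>\<^sup>+x. ennreal (- (c * real_of_int (x 0))) \<partial>\<mu>)"
  shows "AE x in \<mu>. \<forall>V. \<exists>N::nat. \<forall>n\<ge>N. - c * real_of_int (Sx x (- int n)) < V"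
proof -
  have lt': "(\<integral>\<^sup>+x. ennreal (c * real_of_int (x (-1))) \<partial>\<mu>) < (\<integral>\<^sup>+x. ennreal (- (c * real_of_int (x (-1)))) \<partial>\<mu>)"
    using lt nn_shift_bwd[of "\<lambda>k. ennreal (c * real_of_int k)"] nn_shift_bwd[of "\<lambda>k. ennreal (- (c * real_of_int k))"]
    by simp
  have "AE x in \<mu>. \<forall>V. \<exists>N. \<forall>n\<ge>N. B.ssum (\<lambda>x. c * real_of_int (x (-1))) n x < V"
    by (rule B.drift[OF ergB meas_coord_mu lt'])
  moreover have "B.ssum (\<lambda>x. c * real_of_int (x (-1))) n x = - c * real_of_int (Sx x (- int n))" for n x
    unfolding ssum_B using sum_bwd[where n=n and x=x] by (simp add: shiftZ_def sum_distrib_left[symmetric] algebra_simps)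
  ultimately show ?thesis by simp
qed

definition Pp where "Pp = (\<integral>\<^sup>+x. ennreal (real_of_int (x 0)) \<partial>\<mu>)"
definition Pn where "Pn = (\<integral>\<^sup>+x. ennreal (- real_of_int (x 0)) \<partial>\<mu>)"

lemma neg_case:
  assumes "Pp < Pn"
  shows "AE x in \<mu>. (\<forall>V. \<exists>N. \<forall>n\<ge>N. Sx x n < V) \<and> (\<forall>V. \<exists>m. V < Sx x m)"
proof -
  have lt: "(\<integral>\<^sup>+x. ennreal (1 * real_of_int (x 0)) \<partial>\<mu>) < (\<integral>\<^sup>+x. ennreal (- (1 * real_of_int (x 0))) \<partial>\<mu>)"
    using assms unfolding Pp_def Pn_def by simp
  show ?thesis using fwd_gen[OF lt] bwd_gen[OF lt]
  proof eventually_elim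
    case (elim x)
    have 1: "\<forall>V. \<exists>N. \<forall>n\<ge>N. Sx x n < V"
    proof
      fix V :: int
      obtain N :: nat where N0: "\<forall>n\<ge>N. 1 * real_of_int (Sx x (int n)) < real_of_int V" using elim(1) by blast
      then have N: "\<forall>n\<ge>N. real_of_int (Sx x (int n)) < real_of_int V" by simp
      have "\<forall>n\<ge>int N. Sx x n < V"
      proof (intro allI impI)
        fix n :: int assume "int N \<le> n"
        then have "N \<le> nat n" "int (nat n) = n" by auto
        then show "Sx x n < V" using N by (metis of_int_less_iff)
      qed
      then show "\<exists>N. \<forall>n\<ge>N. Sx x n < V" by blast
    qed
    have 2: "\<forall>V. \<exists>m. V < Sx x m"
    proof
      fix V :: int
      obtain N :: nat where N0: "\<forall>n\<ge>N. - 1 * real_of_int (Sx x (- int n)) < real_of_int (- V)" using elim(2) by blast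
      then have N: "\<forall>n\<ge>N. - real_of_int (Sx x (- int n)) < real_of_int (- V)" by simp
      then have "- real_of_int (Sx x (- int N)) < real_of_int (- V)" by blast
      then show "\<exists>m. V < Sx x m" by (intro exI[of _ "- int N"]) simp
    qed
    show ?case using 1 2 by blast
  qed
qed

lemma pos_case:
  assumes "Pn < Pp"
  shows "AE x in \<mu>. (\<forall>V. \<exists>N. \<forall>n\<ge>N. V < Sx x n) \<and> (\<forall>V. \<exists>N. \<forall>n\<le>N. Sx x n < V)"
proof -
  have lt: "(\<integral>\<^sup>+x. ennreal ((-1) * real_of_int (x 0)) \<partial>\<mu>) < (\<integral>\<^sup>+x. ennreal (- ((-1) * real_of_int (x 0))) \<partial>\<mu>)"
    using assms unfolding Pp_def Pn_def by simp
  show ?thesis using fwd_gen[OF lt] bwd_gen[OF lt]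
  proof eventually_elim
    case (elim x)
    have 1: "\<forall>V. \<exists>N. \<forall>n\<ge>N. V < Sx x n"
    proof
      fix V :: int
      obtain N :: nat where N0: "\<forall>n\<ge>N. (- 1) * real_of_int (Sx x (int n)) < real_of_int (- V)" using elim(1) by blast
      then have N: "\<forall>n\<ge>N. - real_of_int (Sx x (int n)) < real_of_int (- V)" by simp
      have "\<forall>n\<ge>int N. V < Sx x n"
      proof (intro allI impI)
        fix n :: int assume "int N \<le> n"
        then have "N \<le> nat n" "int (nat n) = n" by auto
        then have "- real_of_int (Sx x n) < real_of_int (- V)" using N by metis
        then show "V < Sx x n" by simp
      qed
      then show "\<exists>N. \<forall>n\<ge>N. V < Sx x n" by blast
    qed
    have 2: "\<forall>V. \<exists>N. \<forall>n\<le>N. Sx x n < V"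
    proof
      fix V :: int
      obtain N :: nat where N0: "\<forall>n\<ge>N. - (- 1) * real_of_int (Sx x (- int n)) < real_of_int V" using elim(2) by blast
      then have N: "\<forall>n\<ge>N. real_of_int (Sx x (- int n)) < real_of_int V" by simp
      have "\<forall>n\<le>- int N. Sx x n < V"
      proof (intro allI impI)
        fix n :: int assume "n \<le> - int N"
        then have "N \<le> nat (- n)" "- int (nat (- n)) = n" by auto
        then show "Sx x n < V" using N by (metis of_int_less_iff)
      qed
      then show "\<exists>N. \<forall>n\<le>N. Sx x n < V" by blast
    qed
    show ?case using 1 2 by blast
  qed
qed

end


lemma Ftime: assumes "record_map x k = k" "m > k" shows "Sx x m < Sx x k"
proof (rule ccontr)
  assume "\<not> Sx x m < Sx x k"
  then have "\<exists>n>k. Sx x k \<le> Sx x n" using assms(2) by (intro exI[of _ m]) simp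
  then show False using R_props(1)[of k x] assms(1) by simp
qed

lemma sum_if_card: "(\<Sum>k<n. (if k \<in> J then 1/2 else 0 :: real)) = real (card (J \<inter> {..<n})) / 2" for J :: "nat set"
proof (induction n)
  case 0
  then show ?case by simp
next
  case (Suc n)
  have "J \<inter> {..<Suc n} = (if n \<in> J then insert n (J \<inter> {..<n}) else J \<inter> {..<n})"
    by (auto simp: lessThan_Suc)
  then show ?case using Suc by (simp add: field_simps)
qed

lemma D1:
  assumes inf: "\<forall>N::nat. \<exists>n\<ge>N. record_map x (int n) = int n"
  shows "\<forall>V::real. \<exists>N::nat. \<forall>n\<ge>N. (\<Sum>k<n. real_of_int (x (int k)) + (if record_map x (int k) = int k then 1/2 else 0)) < V"
proof
  fix V :: real
  define J where "J = {k::nat. record_map x (int k) = int k}"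
  have sumeq: "(\<Sum>k<n. real_of_int (x (int k)) + (if record_map x (int k) = int k then 1/2 else 0))
      = real_of_int (Sx x (int n)) + real (card (J \<inter> {..<n})) / 2" for n
    using sum_fwd[where x=x and n=n] sum_if_card[of J n] unfolding J_def sum.distrib by simp
  have J0: "J \<noteq> {}" using inf unfolding J_def by auto
  define j1 where "j1 = (LEAST k. k \<in> J)"
  have j1J: "j1 \<in> J" unfolding j1_def using J0 by (auto intro: LeastI)
  have j1le: "k \<in> J \<Longrightarrow> j1 \<le> k" for k unfolding j1_def by (rule Least_le)
  have C: "n \<ge> j1 \<Longrightarrow> Sx x (int n) \<le> Sx x (int j1) - int (card (J \<inter> {j1..<n}))" for n
  proof (induction n rule: less_induct)
    case (less n)
    show ?case
    proof (cases "n = j1")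
      case True
      then show ?thesis by simp
    next
      case False
      define A where "A = J \<inter> {j1..<n}"
      have finA: "finite A" unfolding A_def by simp
      have j1A: "j1 \<in> A" unfolding A_def using j1J less.prems False by simp
      define j where "j = Max A"
      have jA: "j \<in> A" unfolding j_def using finA j1A by (intro Max_in) auto
      have jmax: "k \<in> A \<Longrightarrow> k \<le> j" for k unfolding j_def using finA by simp
      have jJ: "j \<in> J" "j1 \<le> j" "j < n" using jA unfolding A_def by auto
      have Aeq: "A = insert j (J \<inter> {j1..<j})"
      proof
        show "A \<subseteq> insert j (J \<inter> {j1..<j})"
        proof
          fix k assume "k \<in> A"
          then show "k \<in> insert j (J \<inter> {j1..<j})" using jmax[of k] unfolding A_def by (cases "k = j") auto
        qed
        show "insert j (J \<inter> {j1..<j}) \<subseteq> A" using jA jJ unfolding A_def by auto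
      qed
      have cardA: "card A = card (J \<inter> {j1..<j}) + 1" unfolding Aeq by simp
      have IH: "Sx x (int j) \<le> Sx x (int j1) - int (card (J \<inter> {j1..<j}))" using less.IH[OF jJ(3) jJ(2)] .
      have "Sx x (int n) < Sx x (int j)" by (rule Ftime) (use jJ J_def in auto)
      then show ?thesis using IH cardA unfolding A_def by simp
    qed
  qed
  have Jlow: "J \<inter> {..<n} = J \<inter> {j1..<n}" for n using j1le by auto
  have infJ: "infinite J" unfolding infinite_nat_iff_unbounded_le J_def using inf by blast
  define K where "K = nat \<lceil>2 * (real_of_int (Sx x (int j1)) - V)\<rceil> + 1"
  obtain B where B: "finite B" "card B = K" "B \<subseteq> J" using infinite_arbitrarily_large[OF infJ] by blast
  have Bne: "B \<noteq> {}" using B K_def by auto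
  define N where "N = max j1 (Suc (Max B))"
  have "\<forall>n\<ge>N. real_of_int (Sx x (int n)) + real (card (J \<inter> {..<n})) / 2 < V"
  proof (intro allI impI)
    fix n assume n: "N \<le> n"
    have "B \<subseteq> J \<inter> {j1..<n}"
    proof
      fix b assume b: "b \<in> B"
      have "b \<le> Max B" using B(1) b by simp
      then show "b \<in> J \<inter> {j1..<n}" using b B(3) j1le[of b] n unfolding N_def by auto
    qed
    then have "K \<le> card (J \<inter> {j1..<n})" using B by (metis card_mono finite_Int finite_atLeastLessThan)
    then have r1: "real K \<le> real (card (J \<inter> {j1..<n}))" by simp
    have "Sx x (int n) \<le> Sx x (int j1) - int (card (J \<inter> {j1..<n}))" using C n unfolding N_def by simp
    then have r2: "real_of_int (Sx x (int n)) \<le> real_of_int (Sx x (int j1)) - real (card (J \<inter> {j1..<n}))"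
      by (metis of_int_diff of_int_le_iff of_int_of_nat_eq)
    have r3: "real K = real (nat \<lceil>2 * (real_of_int (Sx x (int j1)) - V)\<rceil>) + 1" unfolding K_def by simp
    have "2 * (real_of_int (Sx x (int j1)) - V) \<le> real (nat \<lceil>2 * (real_of_int (Sx x (int j1)) - V)\<rceil>)"
      by (rule real_nat_ceiling_ge)
    then have "2 * (real_of_int (Sx x (int j1)) - V) < real (card (J \<inter> {j1..<n}))"
      using r1 r3 by argo
    then show "real_of_int (Sx x (int n)) + real (card (J \<inter> {..<n})) / 2 < V"
      unfolding Jlow using r2 by argo
  qed
  then show "\<exists>N. \<forall>n\<ge>N. (\<Sum>k<n. real_of_int (x (int k)) + (if record_map x (int k) = int k then 1/2 else 0)) < V"
    unfolding sumeq by blast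
qed

context lawsetup begin

lemma zero_nofix:
  assumes eq: "Pp = Pn" and fin: "Pp \<noteq> \<infinity>"
  shows "AE x in \<mu>. nofix x"
proof -
  define F0 where "F0 = {x. record_map x 0 = 0}"
  have "Measurable.pred seq_space (\<lambda>x. record_map x 0 = 0)" by measurable
  then have F0m: "F0 \<in> sets seq_space" unfolding pred_def F0_def space_seq by simp
  then have F0mu[measurable]: "F0 \<in> sets \<mu>" using sets_mu by simp
  have X0int: "integrable \<mu> (\<lambda>x. real_of_int (x 0))"
    unfolding real_integrable_def using fin eq unfolding Pp_def Pn_def
    using meas_coord_mu[of 1 0] by simp
  have X0zero: "(\<integral>x. real_of_int (x 0) \<partial>\<mu>) = 0"
    using real_lebesgue_integral_def[OF X0int] eq unfolding Pp_def Pn_def by simp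
  have F0null: "emeasure \<mu> F0 = 0"
  proof (rule ccontr)
    assume ne: "emeasure \<mu> F0 \<noteq> 0"
    define h where "h x = real_of_int (x 0) + indicator F0 x / 2" for x
    have [measurable]: "(\<lambda>x. real_of_int (x 0)) \<in> borel_measurable \<mu>" using meas_coord_mu[of 1 0] by simp
    have hm[measurable]: "h \<in> borel_measurable \<mu>" unfolding h_def by measurable
    have "integrable \<mu> (indicator F0 :: _ \<Rightarrow> real)"
      by (rule integrable_real_indicator[OF F0mu]) (simp add: infinity_ennreal_def less_top[symmetric])
    then have iint: "integrable \<mu> (\<lambda>x. indicator F0 x / 2 :: real)"
      by (rule integrable_divide_zero)
    have hint: "integrable \<mu> h" unfolding h_def using X0int iint by (rule Bochner_Integration.integrable_add)
    have "(\<integral>x. h x \<partial>\<mu>) = (\<integral>x. real_of_int (x 0) \<partial>\<mu>) + (\<integral>x. indicator F0 x / 2 \<partial>\<mu>)"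
      unfolding h_def by (rule Bochner_Integration.integral_add[OF X0int iint])
    also have "\<dots> = measure \<mu> F0 / 2" using X0zero F0mu space_mu by simp
    finally have hI: "(\<integral>x. h x \<partial>\<mu>) = measure \<mu> F0 / 2" .
    have "measure \<mu> F0 \<noteq> 0" using ne F.emeasure_eq_measure[of F0] by auto
    then have mpos: "measure \<mu> F0 > 0" using measure_nonneg[of \<mu> F0] by linarith
    have fin1: "(\<integral>\<^sup>+x. ennreal (h x) \<partial>\<mu>) \<noteq> \<infinity>" "(\<integral>\<^sup>+x. ennreal (- h x) \<partial>\<mu>) \<noteq> \<infinity>"
      using hint unfolding real_integrable_def by auto
    have "enn2real (\<integral>\<^sup>+x. ennreal (- h x) \<partial>\<mu>) < enn2real (\<integral>\<^sup>+x. ennreal (h x) \<partial>\<mu>)"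
      using real_lebesgue_integral_def[OF hint] hI mpos by simp
    then have lt: "(\<integral>\<^sup>+x. ennreal (- h x) \<partial>\<mu>) < (\<integral>\<^sup>+x. ennreal (- (- h x)) \<partial>\<mu>)"
      using fin1 by (simp add: enn2real_less_iff[symmetric] infinity_ennreal_def less_top)
    have d: "AE x in \<mu>. \<forall>V. \<exists>N. \<forall>n\<ge>N. F.ssum (\<lambda>x. - h x) n x < V"
      using F.drift[OF ergF borel_measurable_uminus[OF hm] lt] .
    have r: "AE x in \<mu>. \<forall>N. \<exists>n\<ge>N. (shiftZ 1 ^^ n) x \<in> F0"
      by (rule F.recur[OF ergF F0mu ne])
    have "AE x in \<mu>. False" using d r
    proof eventually_elim
      case (elim x)
      have inf: "\<forall>N::nat. \<exists>n\<ge>N. record_map x (int n) = int n"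
        using elim(2) unfolding funpow_F F0_def by (simp add: rm_shiftZ)
      have ind: "indicator F0 (shiftZ (int k) x) / 2 = (if record_map x (int k) = int k then 1/2 else 0 :: real)" for k
        unfolding F0_def by (simp add: rm_shiftZ indicator_def)
      have sh: "F.ssum h n x = (\<Sum>k<n. real_of_int (x (int k)) + (if record_map x (int k) = int k then 1/2 else 0))" for n
        unfolding ssum_F h_def ind by (simp add: shiftZ_def)
      have shm: "F.ssum (\<lambda>x. - h x) n x = - F.ssum h n x" for n
        unfolding F.ssum_def by (simp add: sum_negf)
      obtain N1 where N1: "\<forall>n\<ge>N1. F.ssum h n x < 0" using D1[OF inf] unfolding sh[symmetric] by blast
      obtain N2 where N2: "\<forall>n\<ge>N2. F.ssum (\<lambda>x. - h x) n x < 0" using elim(1) by blast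
      have "F.ssum h (max N1 N2) x < 0" "F.ssum (\<lambda>x. - h x) (max N1 N2) x < 0" using N1 N2 by auto
      then show False using shm by (metis neg_0_less_iff_less not_less_iff_gr_or_eq)
    qed
    then show False using F.AE_False by simp
  qed
  have "AE x in \<mu>. x \<notin> F0" using F0null F0mu by (intro AE_not_in) (simp add: null_sets_def)
  moreover have "{x. x \<notin> F0} \<in> sets seq_space" using sets.compl_sets[OF F0m] space_seq
    by (simp add: Compl_eq_Diff_UNIV[symmetric] Collect_neg_eq)
  ultimately have "AE x in \<mu>. shiftZ j x \<notin> F0" for j by (rule AE_shiftZ)
  then have "AE x in \<mu>. \<forall>j. shiftZ j x \<notin> F0" by (simp add: AE_all_countable)
  then show ?thesis
  proof (rule eventually_mono)
    fix x assume H: "\<forall>j. shiftZ j x \<notin> F0"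
    show "nofix x"
    proof
      fix i
      show "\<exists>n>i. Sx x i \<le> Sx x n"
      proof (rule ccontr)
        assume "\<not> (\<exists>n>i. Sx x i \<le> Sx x n)"
        then have "record_map x i = i" by (rule R_fix)
        then have "shiftZ i x \<in> F0" unfolding F0_def by (simp add: rm_shiftZ)
        then show False using H by blast
      qed
    qed
  qed
qed

end


context lawsetup begin

lemma min_family:
  fixes S :: "(int \<Rightarrow> int) \<Rightarrow> int set"
  assumes Sm: "\<And>k. {x. k \<in> S x} \<in> sets seq_space"
  shows "{x. k \<in> S x \<and> (\<forall>w<k. w \<notin> S x)} \<in> sets seq_space"
    and "inj (g :: nat \<Rightarrow> int) \<Longrightarrow> (\<Sum>n<N. measure \<mu> {x. g n \<in> S x \<and> (\<forall>w<g n. w \<notin> S x)}) \<le> 1"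
proof -
  define E where "E k = {x. k \<in> S x \<and> (\<forall>w<k. w \<notin> S x)}" for k
  have [measurable]: "Measurable.pred seq_space (\<lambda>x. k \<in> S x)" for k
    using Sm[of k] unfolding pred_def space_seq by simp
  have "Measurable.pred seq_space (\<lambda>x. k \<in> S x \<and> (\<forall>w<k. w \<notin> S x))" for k by measurable
  then have Em: "E k \<in> sets seq_space" for k unfolding pred_def space_seq E_def by simp
  then show "{x. k \<in> S x \<and> (\<forall>w<k. w \<notin> S x)} \<in> sets seq_space" unfolding E_def .
  have disj: "E k \<inter> E k' = {}" if "k \<noteq> k'" for k k'
  proof -
    { fix a b :: int assume "a < b"
      then have "E a \<inter> E b = {}" unfolding E_def by auto }
    then show ?thesis using that by (metis inf_commute linorder_neqE)
  qed
  assume g: "inj g"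
  have "(\<Sum>n<N. measure \<mu> (E (g n))) = measure \<mu> (\<Union>n\<in>{..<N}. E (g n))"
  proof (rule F.finite_measure_finite_Union[symmetric])
    show "finite {..<N}" by simp
    show "(\<lambda>n. E (g n)) ` {..<N} \<subseteq> sets \<mu>" using Em sets_mu by auto
    show "disjoint_family_on (\<lambda>n. E (g n)) {..<N}"
      unfolding disjoint_family_on_def using disj g by (auto simp: inj_eq)
  qed
  also have "\<dots> \<le> 1" by (rule F.prob_le_1)
  finally show "(\<Sum>n<N. measure \<mu> {x. g n \<in> S x \<and> (\<forall>w<g n. w \<notin> S x)}) \<le> 1" unfolding E_def .
qed

lemma cov_null:
  fixes Z :: "(int \<Rightarrow> int) \<Rightarrow> int set"
  assumes Zm: "\<And>k. {x. k \<in> Z x} \<in> sets seq_space"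
    and cov: "\<And>x k. k \<in> Z (shiftZ 1 x) \<longleftrightarrow> k + 1 \<in> Z x"
  shows "AE x in \<mu>. \<not> (Z x \<noteq> {} \<and> bdd_below (Z x))"
proof -
  define E where "E k = {x. k \<in> Z x \<and> (\<forall>w<k. w \<notin> Z x)}" for k
  have Em: "E k \<in> sets seq_space" for k unfolding E_def by (rule min_family(1)[OF Zm])
  have pre: "shiftZ 1 -` E k = E (k + 1)" for k
  proof (rule set_eqI)
    fix x
    have "(\<forall>w<k. w + 1 \<notin> Z x) \<longleftrightarrow> (\<forall>w<k + 1. w \<notin> Z x)"
    proof
      assume H: "\<forall>w<k. w + 1 \<notin> Z x"
      show "\<forall>w<k + 1. w \<notin> Z x"
      proof (intro allI impI)
        fix w assume "w < k + 1"
        then show "w \<notin> Z x" using H[rule_format, of "w - 1"] by simp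
      qed
    qed auto
    then show "x \<in> shiftZ 1 -` E k \<longleftrightarrow> x \<in> E (k + 1)" unfolding E_def by (simp add: cov)
  qed
  have step: "emeasure \<mu> (E (k + 1)) = emeasure \<mu> (E k)" for k using pres1[OF Em[of k]] pre[of k] by simp
  have up: "emeasure \<mu> (E (int n)) = emeasure \<mu> (E 0)" for n
  proof (induction n)
    case (Suc n)
    then show ?case using step[of "int n"] by (simp add: add.commute)
  qed simp
  have down: "emeasure \<mu> (E (- int n)) = emeasure \<mu> (E 0)" for n
  proof (induction n)
    case (Suc n)
    have "emeasure \<mu> (E (- int (Suc n))) = emeasure \<mu> (E (- int (Suc n) + 1))" using step[of "- int (Suc n)"] by simp
    then show ?case using Suc by simp
  qed simp
  have all: "emeasure \<mu> (E k) = emeasure \<mu> (E 0)" for k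
  proof (cases "0 \<le> k")
    case True
    then show ?thesis using up[of "nat k"] by simp
  next
    case False
    then show ?thesis using down[of "nat (- k)"] by simp
  qed
  define m where "m = measure \<mu> (E 0)"
  have mk: "measure \<mu> (E k) = m" for k
  proof -
    have "emeasure \<mu> (E k) = emeasure \<mu> (E 0)" by (rule all)
    then show ?thesis unfolding m_def measure_def by (rule arg_cong)
  qed
  have bound: "real N * m \<le> 1" for N
    using min_family(2)[OF Zm, of int N] unfolding E_def[symmetric] mk by (simp add: inj_on_def)
  have "m = 0"
  proof (rule ccontr)
    assume "m \<noteq> 0"
    then have "0 < m" using measure_nonneg[of \<mu> "E 0"] unfolding m_def by linarith
    then obtain N where "1 < real N * m" using ex_less_of_nat_mult by blast
    then show False using bound[of N] by simp
  qed
  then have null: "emeasure \<mu> (E k) = 0" for k using F.emeasure_eq_measure[of "E k"] mk by simp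
  have "AE x in \<mu>. \<forall>k. x \<notin> E k"
    unfolding AE_all_countable using null Em sets_mu by (intro allI AE_not_in) (simp add: null_sets_def)
  then show ?thesis
  proof (rule eventually_mono)
    fix x assume H: "\<forall>k. x \<notin> E k"
    show "\<not> (Z x \<noteq> {} \<and> bdd_below (Z x))"
    proof
      assume "Z x \<noteq> {} \<and> bdd_below (Z x)"
      then obtain w0 b where w0: "w0 \<in> Z x" and b: "\<forall>w\<in>Z x. b \<le> w" unfolding bdd_below_def by blast
      define k where "k = (LEAST w. w \<in> Z x)"
      have "k \<in> Z x" unfolding k_def by (rule int_least(1)[of _ w0 "b - 1"]) (use w0 b in auto)
      moreover have "k \<le> w" if "w \<in> Z x" for w unfolding k_def by (rule int_least(2)[of _ w0 "b - 1"]) (use w0 b that in auto)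
      ultimately have "x \<in> E k" unfolding E_def by force
      then show False using H by blast
    qed
  qed
qed

lemma pred_fo[measurable]: "Measurable.pred seq_space (\<lambda>x. v \<in> fo x u)"
  using sets_fo[of v u] unfolding pred_def .

lemma foil_fin: "AE x in \<mu>. \<forall>i. (\<forall>v\<in>fo x i. i \<le> v) \<longrightarrow> finite (fo x i)"
proof -
  define D where "D k = {y. k \<in> fo y 0 \<and> (\<forall>v<k. v \<notin> fo y 0)}" for k
  define C where "C j = {x. 0 \<in> fo x (int j) \<and> (\<forall>v<0. v \<notin> fo x (int j))}" for j :: nat
  have Dm: "D k \<in> sets seq_space" for k unfolding D_def by (rule min_family(1)) (use sets_fo in \<open>simp add: space_seq\<close>)
  have CD: "C j = shiftZ (int j) -` D (- int j)" for j
  proof (rule set_eqI)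
    fix x
    have "(\<forall>v < - int j. v + int j \<notin> fo x (int j)) \<longleftrightarrow> (\<forall>v<0. v \<notin> fo x (int j))"
    proof
      assume H: "\<forall>v < - int j. v + int j \<notin> fo x (int j)"
      show "\<forall>v<0. v \<notin> fo x (int j)"
      proof (intro allI impI)
        fix v :: int assume "v < 0"
        then show "v \<notin> fo x (int j)" using H[rule_format, of "v - int j"] by simp
      qed
    qed auto
    then show "x \<in> C j \<longleftrightarrow> x \<in> shiftZ (int j) -` D (- int j)"
      unfolding C_def D_def by (simp add: fo_shiftZ)
  qed
  have Cm: "C j \<in> sets \<mu>" for j using measurable_sets[OF meas_shiftZ Dm] space_seq sets_mu CD by simp
  have mC: "measure \<mu> (C j) = measure \<mu> (D (- int j))" for j
    unfolding measure_def CD presZ[OF Dm] ..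
  have Cfin: "emeasure \<mu> (C j) < \<infinity>" for j
    using F.emeasure_finite[of "C j"] by (simp add: less_top[symmetric] infinity_ennreal_def)
  have summ: "summable (\<lambda>j. measure \<mu> (C j))"
  proof (rule summableI_nonneg_bounded)
    show "0 \<le> measure \<mu> (C j)" for j by simp
    show "(\<Sum>j<N. measure \<mu> (C j)) \<le> 1" for N
      unfolding mC D_def using min_family(2)[of "\<lambda>y. fo y 0" "\<lambda>n. - int n" N] sets_fo space_seq
      by (simp add: inj_on_def)
  qed
  have bc: "AE x in \<mu>. eventually (\<lambda>j. x \<in> space \<mu> - C j) sequentially"
    using borel_cantelli_AE1[OF Cm Cfin summ] .
  define Q where "Q x \<longleftrightarrow> (\<forall>v. v \<in> fo x 0 \<longrightarrow> 0 \<le> v) \<longrightarrow> (\<exists>B::nat. \<forall>v. v \<in> fo x 0 \<longrightarrow> v \<le> int B)" for x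
  have AQ: "AE x in \<mu>. Q x" using bc
  proof (rule eventually_mono)
    fix x assume ev: "eventually (\<lambda>j. x \<in> space \<mu> - C j) sequentially"
    show "Q x" unfolding Q_def
    proof (intro impI, rule ccontr)
      assume low: "\<forall>v. v \<in> fo x 0 \<longrightarrow> 0 \<le> v" and nb: "\<not> (\<exists>B::nat. \<forall>v. v \<in> fo x 0 \<longrightarrow> v \<le> int B)"
      obtain N where N: "\<forall>j\<ge>N. x \<notin> C j" using ev unfolding eventually_sequentially by blast
      obtain v where v: "v \<in> fo x 0" "\<not> v \<le> int N" using nb by blast
      have v0: "0 \<le> v" using low v by blast
      have feq: "fo x v = fo x 0" using fo_eq[OF v(1)] .
      have "x \<in> C (nat v)" unfolding C_def using v0 feq fo_refl[of 0 x] low by auto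
      moreover have "N \<le> nat v" using v by simp
      ultimately show False using N by blast
    qed
  qed
  have Qm: "{x. Q x} \<in> sets seq_space"
  proof -
    have "Measurable.pred seq_space Q" unfolding Q_def by measurable
    then show ?thesis unfolding pred_def space_seq by simp
  qed
  have "AE x in \<mu>. Q (shiftZ i x)" for i by (rule AE_shiftZ[OF AQ Qm])
  then have "AE x in \<mu>. \<forall>i. Q (shiftZ i x)" by (simp add: AE_all_countable)
  then show ?thesis
  proof (rule eventually_mono)
    fix x assume H: "\<forall>i. Q (shiftZ i x)"
    show "\<forall>i. (\<forall>v\<in>fo x i. i \<le> v) \<longrightarrow> finite (fo x i)"
    proof (intro allI impI)
      fix i assume low: "\<forall>v\<in>fo x i. i \<le> v"
      have "\<forall>v. v \<in> fo (shiftZ i x) 0 \<longrightarrow> 0 \<le> v"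
      proof (intro allI impI)
        fix v assume "v \<in> fo (shiftZ i x) 0"
        then have "v + i \<in> fo x i" by (simp add: fo_shiftZ)
        then show "0 \<le> v" using low by force
      qed
      then obtain B :: nat where B: "\<forall>v. v \<in> fo (shiftZ i x) 0 \<longrightarrow> v \<le> int B" using H[rule_format, of i] unfolding Q_def by blast
      have "fo x i \<subseteq> {i..i + int B}"
      proof
        fix w assume w: "w \<in> fo x i"
        then have "w - i \<in> fo (shiftZ i x) 0" by (simp add: fo_shiftZ)
        then show "w \<in> {i..i + int B}" using B low w by force
      qed
      then show "finite (fo x i)" by (rule finite_subset) simp
    qed
  qed
qed

end


lemma ereal_neg: "enn2ereal a - enn2ereal b < 0 \<Longrightarrow> a \<noteq> \<infinity> \<or> b \<noteq> \<infinity> \<Longrightarrow> a < b"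
  by (cases a; cases b) (auto simp: infinity_ennreal_def ennreal_less_iff)

lemma ereal_pos: "enn2ereal a - enn2ereal b > 0 \<Longrightarrow> a \<noteq> \<infinity> \<or> b \<noteq> \<infinity> \<Longrightarrow> b < a"
  by (cases a; cases b) (auto simp: infinity_ennreal_def ennreal_less_iff)

lemma ereal_zero: "enn2ereal a - enn2ereal b = 0 \<Longrightarrow> a \<noteq> \<infinity> \<or> b \<noteq> \<infinity> \<Longrightarrow> a = b \<and> a \<noteq> \<infinity>"
  by (cases a; cases b) (auto simp: infinity_ennreal_def)

lemma detFF:
  assumes "\<forall>V. \<exists>N. \<forall>n\<ge>N. Sx x n < V" "\<forall>V. \<exists>m. V < Sx x m"
  shows "\<forall>C \<in> rg_components x. class_FF x C"
  unfolding rg_components_def class_FF_def using comp_finite[OF assms] by auto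

lemma conn_UNIV: "rg_connected x \<Longrightarrow> rg_component x w = UNIV"
  unfolding rg_connected_def rg_component_def by auto

lemma foil_UNIV: "foil x UNIV u = fo x u"
  unfolding foil_def fo_def by auto

lemma detIF:
  assumes nf: "nofix x" and unb: "\<forall>N. \<exists>j\<le>N. j \<in> Pw x"
    and ff: "\<forall>i. (\<forall>v\<in>fo x i. i \<le> v) \<longrightarrow> finite (fo x i)"
  shows "rg_connected x \<and> (\<forall>C \<in> rg_components x. class_IF x C)"
proof -
  have conn: "rg_connected x" by (rule NF_connected[OF nf])
  have fin: "finite (fo x u)" for u
  proof -
    obtain B where B: "\<forall>v\<in>fo x u. B < v" using fo_bdd_below[OF nf unb] by blast
    define m where "m = (LEAST v. v \<in> fo x u)"
    have mf: "m \<in> fo x u" unfolding m_def by (rule int_least(1)[of _ u B]) (use fo_refl B in auto)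
    have ml: "m \<le> v" if "v \<in> fo x u" for v unfolding m_def by (rule int_least(2)[of _ u B]) (use fo_refl B that in auto)
    have eq: "fo x m = fo x u" by (rule fo_eq[OF mf])
    have "\<forall>v\<in>fo x m. m \<le> v" using ml eq by simp
    then have "finite (fo x m)" using ff by blast
    then show ?thesis using eq by simp
  qed
  show ?thesis using conn fin
    unfolding rg_components_def class_IF_def by (auto simp: conn_UNIV foil_UNIV)
qed

lemma detII:
  assumes nf: "nofix x" and P0: "Pw x = {}" and G: "\<not> (G0 x \<noteq> {} \<and> finite (G0 x))"
  shows "rg_connected x \<and> (\<forall>C \<in> rg_components x. class_II x C)"
proof -
  have conn: "rg_connected x" by (rule NF_connected[OF nf])
  have "infinite (fo x u)" for u using G0_fin[OF nf P0] G by blast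
  then show ?thesis using conn
    unfolding rg_components_def class_II_def by (auto simp: conn_UNIV foil_UNIV)
qed

theorem theorem3p6:
  fixes M :: "'a measure" and X :: "int \<Rightarrow> 'a \<Rightarrow> int"
  assumes "prob_space M"
    and "\<And>n. X n \<in> measurable M (count_space UNIV)"
    and "stationary M X" and "ergodic M X"
    and "mean_exists M (X 0)"
  shows "(ext_mean M (X 0) < 0 \<longrightarrow>
            (AE \<omega> in M. \<forall>C \<in> rg_components (\<lambda>n. X n \<omega>). class_FF (\<lambda>n. X n \<omega>) C))
       \<and> (ext_mean M (X 0) > 0 \<longrightarrow>
            (AE \<omega> in M. rg_connected (\<lambda>n. X n \<omega>) \<and>
               (\<forall>C \<in> rg_components (\<lambda>n. X n \<omega>). class_IF (\<lambda>n. X n \<omega>) C)))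
       \<and> (ext_mean M (X 0) = 0 \<longrightarrow>
            (AE \<omega> in M. rg_connected (\<lambda>n. X n \<omega>) \<and>
               (\<forall>C \<in> rg_components (\<lambda>n. X n \<omega>).
                  class_IF (\<lambda>n. X n \<omega>) C \<or> class_II (\<lambda>n. X n \<omega>) C)))"
proof -
  interpret P: prob_space M by (rule assms(1))
  have Xm: "(\<lambda>\<omega> n. X n \<omega>) \<in> measurable M seq_space"
    by (rule measurable_PiM_single') (use assms(2) in \<open>auto simp: space_PiM PiE_UNIV_domain\<close>)
  define \<mu> where "\<mu> = law M X"
  have mu_eq: "\<mu> = distr M seq_space (\<lambda>\<omega> n. X n \<omega>)" unfolding \<mu>_def law_def ..
  have Lax: "lawsetup \<mu>"
  proof (rule lawsetup.intro)
    show "prob_space \<mu>" unfolding mu_eq by (rule P.prob_space_distr[OF Xm])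
    show "sets \<mu> = sets seq_space" unfolding mu_eq by simp
    show "distr \<mu> seq_space shift = \<mu>" using assms(3) unfolding stationary_def \<mu>_def .
    show "\<forall>A\<in>sets seq_space. shift -` A \<inter> space seq_space = A \<longrightarrow> emeasure \<mu> A = 0 \<or> emeasure \<mu> A = 1"
      using assms(4) unfolding ergodic_def \<mu>_def .
  qed
  interpret L: lawsetup \<mu> by (rule Lax)
  have c0: "(\<lambda>x. x 0) \<in> measurable seq_space (count_space UNIV)" by measurable
  have nnX: "(\<integral>\<^sup>+x. f (x 0) \<partial>\<mu>) = (\<integral>\<^sup>+\<omega>. f (X 0 \<omega>) \<partial>M)" for f :: "int \<Rightarrow> ennreal"
  proof -
    have "f \<circ> (\<lambda>x. x 0) \<in> borel_measurable seq_space"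
      by (rule measurable_comp[OF c0]) simp
    then show ?thesis unfolding mu_eq by (subst nn_integral_distr[OF Xm]) (simp_all add: o_def)
  qed
  have Pp: "mean_pos M (X 0) = L.Pp"
  proof -
    have "ennreal (real_of_int (max 0 k)) = ennreal (real_of_int k)" for k :: int
      by (cases "0 \<le> k") (auto simp: ennreal_neg)
    then show ?thesis unfolding mean_pos_def L.Pp_def using nnX[of "\<lambda>k. ennreal (real_of_int k)"] by simp
  qed
  have Pn: "mean_neg M (X 0) = L.Pn"
  proof -
    have "ennreal (real_of_int (max 0 (- k))) = ennreal (- real_of_int k)" for k :: int
      by (cases "0 \<le> k") (auto simp: ennreal_neg)
    then show ?thesis unfolding mean_neg_def L.Pn_def using nnX[of "\<lambda>k. ennreal (- real_of_int k)"] by simp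
  qed
  have ex: "L.Pp \<noteq> \<infinity> \<or> L.Pn \<noteq> \<infinity>" using assms(5) unfolding mean_exists_def Pp Pn .
  have em: "ext_mean M (X 0) = enn2ereal L.Pp - enn2ereal L.Pn" unfolding ext_mean_def Pp Pn ..
  have transfer: "AE \<omega> in M. Q (\<lambda>n. X n \<omega>)" if "AE x in \<mu>. Q x" for Q
    using AE_distrD[OF Xm, of Q] that unfolding mu_eq by simp
  have part1: "ext_mean M (X 0) < 0 \<longrightarrow>
            (AE \<omega> in M. \<forall>C \<in> rg_components (\<lambda>n. X n \<omega>). class_FF (\<lambda>n. X n \<omega>) C)"
  proof
    assume "ext_mean M (X 0) < 0"
    then have "L.Pp < L.Pn" using ereal_neg ex em by simp
    then have "AE x in \<mu>. (\<forall>V. \<exists>N. \<forall>n\<ge>N. Sx x n < V) \<and> (\<forall>V. \<exists>m. V < Sx x m)"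
      by (rule L.neg_case)
    then have "AE x in \<mu>. \<forall>C \<in> rg_components x. class_FF x C"
      by (rule eventually_mono) (use detFF in blast)
    then show "AE \<omega> in M. \<forall>C \<in> rg_components (\<lambda>n. X n \<omega>). class_FF (\<lambda>n. X n \<omega>) C" by (rule transfer)
  qed
  have part2: "ext_mean M (X 0) > 0 \<longrightarrow>
            (AE \<omega> in M. rg_connected (\<lambda>n. X n \<omega>) \<and>
               (\<forall>C \<in> rg_components (\<lambda>n. X n \<omega>). class_IF (\<lambda>n. X n \<omega>) C))"
  proof
    assume "ext_mean M (X 0) > 0"
    then have "L.Pn < L.Pp" using ereal_pos ex em by simp
    then have pc: "AE x in \<mu>. (\<forall>V. \<exists>N. \<forall>n\<ge>N. V < Sx x n) \<and> (\<forall>V. \<exists>N. \<forall>n\<le>N. Sx x n < V)"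
      by (rule L.pos_case)
    have "AE x in \<mu>. rg_connected x \<and> (\<forall>C \<in> rg_components x. class_IF x C)"
      using pc L.foil_fin
    proof eventually_elim
      case (elim x)
      show ?case by (rule detIF[OF pos_nofix pos_Pw]) (use elim in auto)
    qed
    then show "AE \<omega> in M. rg_connected (\<lambda>n. X n \<omega>) \<and>
               (\<forall>C \<in> rg_components (\<lambda>n. X n \<omega>). class_IF (\<lambda>n. X n \<omega>) C)" by (rule transfer)
  qed
  have part3: "ext_mean M (X 0) = 0 \<longrightarrow>
            (AE \<omega> in M. rg_connected (\<lambda>n. X n \<omega>) \<and>
               (\<forall>C \<in> rg_components (\<lambda>n. X n \<omega>).
                  class_IF (\<lambda>n. X n \<omega>) C \<or> class_II (\<lambda>n. X n \<omega>) C))"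
  proof
    assume "ext_mean M (X 0) = 0"
    then have eq: "L.Pp = L.Pn" and fin: "L.Pp \<noteq> \<infinity>" using ereal_zero ex em by auto
    have A3: "AE x in \<mu>. nofix x" by (rule L.zero_nofix[OF eq fin])
    have A4: "AE x in \<mu>. \<not> (Pw x \<noteq> {} \<and> bdd_below (Pw x))"
      by (rule L.cov_null) (use sets_Pw space_seq Pw_shiftZ in auto)
    have A5: "AE x in \<mu>. \<not> (G0 x \<noteq> {} \<and> bdd_below (G0 x))"
      by (rule L.cov_null) (use sets_G0 space_seq G0_shiftZ in auto)
    have "AE x in \<mu>. rg_connected x \<and> (\<forall>C \<in> rg_components x. class_IF x C \<or> class_II x C)"
      using A3 A4 A5 L.foil_fin
    proof eventually_elim
      case (elim x)
      show ?case
      proof (cases "Pw x = {}")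
        case True
        have "\<not> (G0 x \<noteq> {} \<and> finite (G0 x))"
        proof
          assume H: "G0 x \<noteq> {} \<and> finite (G0 x)"
          then have "bdd_below (G0 x)" by (intro bdd_below_finite) simp
          then show False using H elim(3) by blast
        qed
        then show ?thesis using detII[OF elim(1) True] by blast
      next
        case False
        then have "\<not> bdd_below (Pw x)" using elim(2) by blast
        then have unb: "\<forall>N. \<exists>j\<le>N. j \<in> Pw x" unfolding bdd_below_def by (meson not_le less_imp_le)
        show ?thesis using detIF[OF elim(1) unb elim(4)] by blast
      qed
    qed
    then show "AE \<omega> in M. rg_connected (\<lambda>n. X n \<omega>) \<and>
               (\<forall>C \<in> rg_components (\<lambda>n. X n \<omega>).
                  class_IF (\<lambda>n. X n \<omega>) C \<or> class_II (\<lambda>n. X n \<omega>) C)" by (rule transfer)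
  qed
  show ?thesis using part1 part2 part3 by blast
qed


end
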